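(* Let $n=1$ and let $f$ be a Lagrange function of finite order whose Euler–Lagrange expressions $e^1[f],\dots,e^m[f]$ all have order at most $S$ (i.e. depend only on $x$ and $w^j_r$ with $r\le S$). If $S=2K$ is even, then there is a Lagrange function $g$ of order at most $K$ with $e^j[g]=e^j[f]$ for all $j$. If $S=2K+1$ is odd, then there are functions $g_0,g_1,\dots,g_m$ of order at most $K$ such that $e^j[f]=e^j\big[g_0+\sum_{k=1}^m g_k\,w^k_{K+1}\big]$ for all $j$.
   Context: One independent variable $x$, dependent variables $w^1,\dots,w^m$; jet coordinates $w^j_r$ ($r\ge 0$, $w^j_0=w^j$) standing for $d^rw^j/dx^r$. A function "of order at most $K$" is a $C^\infty$ function of $x$ and $w^j_r$ with $r\le K$; all functions are defined on the whole corresponding Euclidean space. $\frac{d}{dx}=\partial_x+\sum_{j,r}w^j_{r+1}\partial_{w^j_r}$ and $e^j[f]=\sum_r(-1)^r\frac{d^r}{dx^r}\frac{\partial f}{\partial w^j_r}$. *)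

theory Defs
  imports "HOL-Analysis.Analysis" "HOL-Library.Groups_Big_Fun"
begin

text \<open>Jet coordinates: X is the independent variable x, W j r stands for w^j_r.
  A point of jet space assigns a real value to every coordinate; a function on jet space
  is a map from such points to the reals (only finitely many coordinates will matter).\<close>

datatype coord = X | W nat nat

type_synonym jpt = "coord \<Rightarrow> real"

definition pd :: "coord \<Rightarrow> (jpt \<Rightarrow> real) \<Rightarrow> jpt \<Rightarrow> real" where
  "pd c f p = deriv (\<lambda>t. f (p(c := t))) (p c)"

fun ipd :: "coord list \<Rightarrow> (jpt \<Rightarrow> real) \<Rightarrow> jpt \<Rightarrow> real" where
  "ipd [] f = f"
| "ipd (c # cs) f = pd c (ipd cs f)"

text \<open>C^infinity: all iterated partial derivatives exist everywhere and are continuous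
  (product topology on jet space; for functions depending on finitely many coordinates this is
  ordinary continuity in those coordinates).\<close>
definition smooth_jet :: "(jpt \<Rightarrow> real) \<Rightarrow> bool" where
  "smooth_jet f \<longleftrightarrow>
     (\<forall>cs c p. (\<lambda>t. ipd cs f (p(c := t))) differentiable (at (p c))) \<and>
     (\<forall>cs. continuous_on UNIV (ipd cs f))"

definition order_le :: "nat \<Rightarrow> nat \<Rightarrow> (jpt \<Rightarrow> real) \<Rightarrow> bool" where
  "order_le m K f \<longleftrightarrow> smooth_jet f \<and>
     (\<forall>p q. p X = q X \<and> (\<forall>j\<in>{1..m}. \<forall>r\<le>K. p (W j r) = q (W j r)) \<longrightarrow> f p = f q)"

definition finite_order :: "nat \<Rightarrow> (jpt \<Rightarrow> real) \<Rightarrow> bool" where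
  "finite_order m f \<longleftrightarrow> (\<exists>K. order_le m K f)"

text \<open>Total derivative d/dx = \<partial>_x + \<Sum>_{j,r} w^j_{r+1} \<partial>_{w^j_r}
  (the sum over r has finitely many nonzero terms for functions of finite order).\<close>
definition Dx :: "nat \<Rightarrow> (jpt \<Rightarrow> real) \<Rightarrow> jpt \<Rightarrow> real" where
  "Dx m f p = pd X f p +
     (\<Sum>j=1..m. Sum_any (\<lambda>r. p (W j (Suc r)) * pd (W j r) f p))"

definition EL :: "nat \<Rightarrow> nat \<Rightarrow> (jpt \<Rightarrow> real) \<Rightarrow> jpt \<Rightarrow> real" where
  "EL m j f p = Sum_any (\<lambda>r. (-1) ^ r * ((Dx m ^^ r) (pd (W j r) f)) p)"

end

theory Submission
  imports Defs
begin


definition dep :: "nat \<Rightarrow> nat \<Rightarrow> (jpt \<Rightarrow> real) \<Rightarrow> bool" where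
  "dep m K f \<longleftrightarrow> (\<forall>p q. p X = q X \<and> (\<forall>j\<in>{1..m}. \<forall>r\<le>K. p (W j r) = q (W j r)) \<longrightarrow> f p = f q)"

lemma order_le_iff: "order_le m K f \<longleftrightarrow> smooth_jet f \<and> dep m K f"
  by (simp add: order_le_def dep_def)

definition Cs :: "nat \<Rightarrow> nat \<Rightarrow> coord set" where
  "Cs m K = insert X {W j r | j r. j \<in> {1..m} \<and> r \<le> K}"

lemma dep_alt: "dep m K f \<longleftrightarrow> (\<forall>p q. (\<forall>c\<in>Cs m K. p c = q c) \<longrightarrow> f p = f q)"
  unfolding dep_def Cs_def by (intro iff_allI) blast

lemma depD: "dep m K f \<Longrightarrow> (\<And>c. c \<in> Cs m K \<Longrightarrow> p c = q c) \<Longrightarrow> f p = f q"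
  unfolding dep_alt by blast

lemma depI: "(\<And>p q. (\<And>c. c \<in> Cs m K \<Longrightarrow> p c = q c) \<Longrightarrow> f p = f q) \<Longrightarrow> dep m K f"
  unfolding dep_alt by blast

lemma Cs_mono: "K \<le> K' \<Longrightarrow> Cs m K \<subseteq> Cs m K'"
  unfolding Cs_def by auto

lemma dep_mono: "K \<le> K' \<Longrightarrow> dep m K f \<Longrightarrow> dep m K' f"
  unfolding dep_def by (meson order_trans)

lemma X_in_Cs[simp]: "X \<in> Cs m K" by (simp add: Cs_def)
lemma W_in_Cs[simp]: "W j r \<in> Cs m K \<longleftrightarrow> j \<in> {1..m} \<and> r \<le> K"
  by (auto simp: Cs_def)

subsection \<open>Partial derivatives\<close>

definition pdiff :: "coord \<Rightarrow> (jpt \<Rightarrow> real) \<Rightarrow> bool" where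
  "pdiff c f \<longleftrightarrow> (\<forall>p. (\<lambda>t. f (p(c:=t))) differentiable (at (p c)))"

lemma pd_has:
  assumes "pdiff c f"
  shows "((\<lambda>t. f (p(c:=t))) has_field_derivative pd c f p) (at (p c))"
  using assms unfolding pdiff_def pd_def
  by (simp add: DERIV_deriv_iff_real_differentiable)

lemma pd_line:
  assumes "pdiff c f"
  shows "((\<lambda>s. f (p(c:=s))) has_field_derivative pd c f (p(c:=t))) (at t)"
  using pd_has[OF assms, of "p(c:=t)"] by simp

lemma pd_eqI:
  assumes "((\<lambda>t. f (p(c:=t))) has_field_derivative D) (at (p c))"
  shows "pd c f p = D"
  using assms unfolding pd_def by (rule DERIV_imp_deriv)

lemma pdiffI:
  assumes "\<And>p. \<exists>D. ((\<lambda>t. f (p(c:=t))) has_field_derivative D) (at (p c))"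
  shows "pdiff c f"
  using assms unfolding pdiff_def real_differentiable_def by blast

lemma pd_const[simp]: "pd c (\<lambda>p. a) = (\<lambda>p. 0)"
  by (rule ext, rule pd_eqI) simp

lemma pdiff_const[simp]: "pdiff c (\<lambda>p. a)"
  by (rule pdiffI) (auto intro: DERIV_const)

lemma coord_line: "(\<lambda>t. (p(c:=t)) d) = (if c = d then (\<lambda>t. t) else (\<lambda>t. p d))"
  by auto

lemma pd_coord[simp]: "pd c (\<lambda>p. p d) = (\<lambda>p. if c = d then 1 else 0)"
  by (rule ext, rule pd_eqI) (auto simp: coord_line)

lemma pdiff_coord[simp]: "pdiff c (\<lambda>p. p d)"
proof (rule pdiffI)
  fix p :: jpt
  show "\<exists>D. ((\<lambda>t. (p(c:=t)) d) has_field_derivative D) (at (p c))"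
    by (cases "c = d") (auto simp: coord_line intro: DERIV_ident DERIV_const)
qed

lemma pdiff_add[intro]: "pdiff c f \<Longrightarrow> pdiff c g \<Longrightarrow> pdiff c (\<lambda>p. f p + g p)"
  unfolding pdiff_def by (auto intro: differentiable_add)

lemma pdiff_mult[intro]: "pdiff c f \<Longrightarrow> pdiff c g \<Longrightarrow> pdiff c (\<lambda>p. f p * g p)"
  unfolding pdiff_def by (auto intro: differentiable_mult)

lemma pd_add: "pdiff c f \<Longrightarrow> pdiff c g \<Longrightarrow> pd c (\<lambda>p. f p + g p) = (\<lambda>p. pd c f p + pd c g p)"
  by (rule ext, rule pd_eqI) (auto intro!: derivative_eq_intros pd_has)

lemma pd_mult: "pdiff c f \<Longrightarrow> pdiff c g \<Longrightarrow>
   pd c (\<lambda>p. f p * g p) = (\<lambda>p. pd c f p * g p + f p * pd c g p)"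
  by (rule ext, rule pd_eqI) (auto intro!: derivative_eq_intros pd_has)

lemma pdiff_sum: "(\<And>i. i \<in> A \<Longrightarrow> pdiff c (f i)) \<Longrightarrow> pdiff c (\<lambda>p. \<Sum>i\<in>A. f i p)"
  by (induction A rule: infinite_finite_induct) auto

lemma pd_sum: "(\<And>i. i \<in> A \<Longrightarrow> pdiff c (f i)) \<Longrightarrow>
   pd c (\<lambda>p. \<Sum>i\<in>A. f i p) = (\<lambda>p. \<Sum>i\<in>A. pd c (f i) p)"
proof (induction A rule: infinite_finite_induct)
  case (insert x F)
  have "pd c (\<lambda>p. \<Sum>i\<in>insert x F. f i p) = pd c (\<lambda>p. f x p + (\<Sum>i\<in>F. f i p))"
    using insert by simp
  also have "\<dots> = (\<lambda>p. pd c (f x) p + pd c (\<lambda>p. \<Sum>i\<in>F. f i p) p)"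
    using insert by (intro pd_add pdiff_sum) auto
  finally show ?case using insert by simp
qed auto

lemma pd_zero_outside:
  assumes "dep m K f" "c \<notin> Cs m K"
  shows "pd c f p = 0"
proof -
  have "\<And>t. f (p(c:=t)) = f p" using assms by (intro depD[OF assms(1)]) auto
  then show ?thesis by (intro pd_eqI) simp
qed

lemma dep_pd: assumes "dep m K f" shows "dep m K (pd c f)"
proof (rule depI)
  fix p q :: jpt assume pq: "\<And>c. c \<in> Cs m K \<Longrightarrow> p c = q c"
  show "pd c f p = pd c f q"
  proof (cases "c \<in> Cs m K")
    case True
    have "(\<lambda>t. f (p(c:=t))) = (\<lambda>t. f (q(c:=t)))"
      using pq by (intro ext depD[OF assms]) auto
    then show ?thesis using True pq unfolding pd_def by simp
  next
    case False
    then show ?thesis using pd_zero_outside[OF assms] by simp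
  qed
qed

lemma dep_const[simp]: "dep m K (\<lambda>p. a)" by (simp add: dep_def)
lemma dep_coord: "c \<in> Cs m K \<Longrightarrow> dep m K (\<lambda>p. p c)" by (rule depI) simp
lemma dep_add: "dep m K f \<Longrightarrow> dep m K g \<Longrightarrow> dep m K (\<lambda>p. f p + g p)"
proof (rule depI)
  fix p q :: jpt assume "dep m K f" "dep m K g" "\<And>c. c \<in> Cs m K \<Longrightarrow> p c = q c"
  then show "f p + g p = f q + g q" using depD[of m K f p q] depD[of m K g p q] by simp
qed
lemma dep_mult: "dep m K f \<Longrightarrow> dep m K g \<Longrightarrow> dep m K (\<lambda>p. f p * g p)"
proof (rule depI)
  fix p q :: jpt assume "dep m K f" "dep m K g" "\<And>c. c \<in> Cs m K \<Longrightarrow> p c = q c"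
  then show "f p * g p = f q * g q" using depD[of m K f p q] depD[of m K g p q] by simp
qed
lemma dep_sum: "(\<And>i. i \<in> A \<Longrightarrow> dep m K (f i)) \<Longrightarrow> dep m K (\<lambda>p. \<Sum>i\<in>A. f i p)"
proof (rule depI)
  fix p q :: jpt assume "\<And>i. i \<in> A \<Longrightarrow> dep m K (f i)" "\<And>c. c \<in> Cs m K \<Longrightarrow> p c = q c"
  then show "(\<Sum>i\<in>A. f i p) = (\<Sum>i\<in>A. f i q)"
    by (intro sum.cong refl) (rule depD, auto)
qed

subsection \<open>Smoothness\<close>

lemma ipd_append: "ipd (cs @ [c]) f = ipd cs (pd c f)"
  by (induction cs) auto

lemma smooth_jetI:
  assumes "f \<in> A" "\<And>a c. a \<in> A \<Longrightarrow> pdiff c a" "\<And>a. a \<in> A \<Longrightarrow> continuous_on UNIV a"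
    "\<And>a c. a \<in> A \<Longrightarrow> pd c a \<in> A"
  shows "smooth_jet f"
proof -
  have "ipd cs f \<in> A" for cs
  proof (induction cs)
    case Nil then show ?case using assms(1) by simp
  next
    case (Cons c cs) then show ?case using assms(4) by simp
  qed
  then show ?thesis using assms unfolding smooth_jet_def pdiff_def by blast
qed

lemma smooth_jetI2:
  assumes "f \<in> A" "\<And>a c. a \<in> A \<Longrightarrow> pdiff c a \<and> continuous_on UNIV a \<and> pd c a \<in> A"
  shows "smooth_jet f"
  by (rule smooth_jetI[of f A]) (use assms in blast)+

lemma smooth_pdiff: "smooth_jet f \<Longrightarrow> pdiff c f"
  unfolding smooth_jet_def pdiff_def
proof (elim conjE, intro allI)
  fix p assume "\<forall>cs c p. (\<lambda>t. ipd cs f (p(c := t))) differentiable at (p c)"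
  then have "(\<lambda>t. ipd [] f (p(c := t))) differentiable at (p c)" by blast
  then show "(\<lambda>t. f (p(c := t))) differentiable at (p c)" by simp
qed

lemma smooth_cont: "smooth_jet f \<Longrightarrow> continuous_on UNIV f"
  unfolding smooth_jet_def
proof (elim conjE)
  assume "\<forall>cs. continuous_on UNIV (ipd cs f)"
  then have "continuous_on UNIV (ipd [] f)" by blast
  then show ?thesis by simp
qed

lemma smooth_pd: "smooth_jet f \<Longrightarrow> smooth_jet (pd c f)"
  unfolding smooth_jet_def
proof (elim conjE, intro conjI allI)
  fix cs d p
  assume "\<forall>cs c p. (\<lambda>t. ipd cs f (p(c := t))) differentiable at (p c)"
  then have "(\<lambda>t. ipd (cs @ [c]) f (p(d := t))) differentiable at (p d)" by blast
  then show "(\<lambda>t. ipd cs (pd c f) (p(d := t))) differentiable at (p d)" by (simp add: ipd_append)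
next
  fix cs assume "\<forall>cs. continuous_on UNIV (ipd cs f)"
  then have "continuous_on UNIV (ipd (cs @ [c]) f)" by blast
  then show "continuous_on UNIV (ipd cs (pd c f))" by (simp add: ipd_append)
qed

lemma smooth_ipd: "smooth_jet f \<Longrightarrow> smooth_jet (ipd cs f)"
  by (induction cs) (auto intro: smooth_pd)

inductive_set alg :: "(jpt \<Rightarrow> real) set \<Rightarrow> (jpt \<Rightarrow> real) set" for S where
  atom: "a \<in> S \<Longrightarrow> a \<in> alg S"
| const: "(\<lambda>p. k) \<in> alg S"
| add: "a \<in> alg S \<Longrightarrow> b \<in> alg S \<Longrightarrow> (\<lambda>p. a p + b p) \<in> alg S"
| mult: "a \<in> alg S \<Longrightarrow> b \<in> alg S \<Longrightarrow> (\<lambda>p. a p * b p) \<in> alg S"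

lemma alg_props:
  assumes "\<And>a c. a \<in> S \<Longrightarrow> pdiff c a" "\<And>a. a \<in> S \<Longrightarrow> continuous_on UNIV a"
    "\<And>a c. a \<in> S \<Longrightarrow> pd c a \<in> alg S"
    and "a \<in> alg S"
  shows "pdiff c a \<and> continuous_on UNIV a \<and> pd c a \<in> alg S"
  using assms(4)
proof (induction a arbitrary: c rule: alg.induct)
  case (atom a) then show ?case using assms by auto
next
  case (const k) then show ?case by (auto intro: alg.const)
next
  case (add a b) then show ?case
    by (auto simp: pd_add intro: alg.add continuous_on_add)
next
  case (mult a b) then show ?case
    by (auto simp: pd_mult intro!: alg.add alg.mult continuous_on_mult)
qed

lemma alg_smooth:
  assumes "\<And>a c. a \<in> S \<Longrightarrow> pdiff c a" "\<And>a. a \<in> S \<Longrightarrow> continuous_on UNIV a"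
    "\<And>a c. a \<in> S \<Longrightarrow> pd c a \<in> alg S"
    and "a \<in> alg S"
  shows "smooth_jet a"
  by (rule smooth_jetI[of _ "alg S"]) (use alg_props[OF assms(1-3)] assms(4) in auto)

definition ipds :: "(jpt \<Rightarrow> real) \<Rightarrow> (jpt \<Rightarrow> real) set" where
  "ipds f = range (\<lambda>cs. ipd cs f)"

lemma ipds_props:
  assumes "smooth_jet f" "a \<in> ipds f"
  shows "pdiff c a" "continuous_on UNIV a" "pd c a \<in> ipds f"
  using assms smooth_ipd[OF assms(1)] smooth_pdiff smooth_cont unfolding ipds_def
  by (auto intro: range_eqI[where x="c # _"])

lemma ipds_self: "f \<in> ipds f"
  unfolding ipds_def by (metis ipd.simps(1) rangeI)

lemma smooth_two:
  assumes "smooth_jet f" "smooth_jet g" "h \<in> alg (ipds f \<union> ipds g \<union> range (\<lambda>c p. p c))"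
  shows "smooth_jet h"
proof (rule alg_smooth[OF _ _ _ assms(3)])
  fix a c assume "a \<in> ipds f \<union> ipds g \<union> range (\<lambda>c p. p c)"
  then show "pdiff c a" "continuous_on UNIV a" "pd c a \<in> alg (ipds f \<union> ipds g \<union> range (\<lambda>c p. p c))"
    using ipds_props[OF assms(1)] ipds_props[OF assms(2)]
    by (auto intro: alg.atom alg.const simp: if_distrib cong: if_cong)
qed

lemma smooth_add[intro]: "smooth_jet f \<Longrightarrow> smooth_jet g \<Longrightarrow> smooth_jet (\<lambda>p. f p + g p)"
  by (rule smooth_two[of f g], assumption+) (rule alg.add; rule alg.atom; simp add: ipds_self)

lemma smooth_mult[intro]: "smooth_jet f \<Longrightarrow> smooth_jet g \<Longrightarrow> smooth_jet (\<lambda>p. f p * g p)"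
  by (rule smooth_two[of f g], assumption+) (rule alg.mult; rule alg.atom; simp add: ipds_self)

lemma smooth_const[simp, intro]: "smooth_jet (\<lambda>p. a)"
  by (rule smooth_jetI[of _ "{\<lambda>p. a, \<lambda>p. 0}"]) auto

lemma smooth_coord[simp, intro]: "smooth_jet (\<lambda>p. p c)"
  by (rule smooth_two[of "\<lambda>p. 0" "\<lambda>p. 0"]) (auto intro: alg.atom)

lemma smooth_sum[intro]: "(\<And>i. i \<in> A \<Longrightarrow> smooth_jet (f i)) \<Longrightarrow> smooth_jet (\<lambda>p. \<Sum>i\<in>A. f i p)"
  by (induction A rule: infinite_finite_induct) auto

lemma smooth_minus[intro]: "smooth_jet f \<Longrightarrow> smooth_jet g \<Longrightarrow> smooth_jet (\<lambda>p. f p - g p)"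
proof -
  assume a: "smooth_jet f" "smooth_jet g"
  have "smooth_jet (\<lambda>p. f p + (-1) * g p)"
    by (rule smooth_add[OF a(1)], rule smooth_mult[OF smooth_const a(2)])
  then show ?thesis by simp
qed



lemma cont_upd:
  fixes a :: "'x::topological_space \<Rightarrow> jpt"
  assumes "continuous_on S a" "continuous_on S \<phi>"
  shows "continuous_on S (\<lambda>x. (a x)(c := \<phi> x))"
proof (rule continuous_on_coordinatewise_then_product)
  fix i
  show "continuous_on S (\<lambda>x. ((a x)(c := \<phi> x)) i)"
  proof (cases "i = c")
    case True then show ?thesis using assms(2) by simp
  next
    case False then show ?thesis using continuous_on_product_then_coordinatewise[OF assms(1)] by simp
  qed
qed

lemma cont_comp_smooth:
  assumes "smooth_jet g" "continuous_on S a"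
  shows "continuous_on S (\<lambda>x. g (a x))"
  using continuous_on_compose[OF assms(2) continuous_on_subset[OF smooth_cont[OF assms(1)]]]
  by (simp add: o_def)

lemma cont_id_jpt: "continuous_on S (\<lambda>p::jpt. p)" by (rule continuous_on_id)

subsection \<open>Substitution of a constant\<close>

lemma smooth_subst_const:
  assumes "smooth_jet f"
  shows "smooth_jet (\<lambda>p. f (p(c := v)))"
proof (rule smooth_jetI2[of _ "insert (\<lambda>p. 0) ((\<lambda>g p. g (p(c := v))) ` ipds f)"])
  show "(\<lambda>p. f (p(c := v))) \<in> insert (\<lambda>p. 0) ((\<lambda>g p. g (p(c := v))) ` ipds f)"
    using ipds_self by blast
next
  fix a d assume "a \<in> insert (\<lambda>p. 0) ((\<lambda>g p. g (p(c := v))) ` ipds f)"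
  then consider "a = (\<lambda>p. 0)" | g where "g \<in> ipds f" "a = (\<lambda>p. g (p(c := v)))" by blast
  then show "pdiff d a \<and> continuous_on UNIV a \<and> pd d a \<in> insert (\<lambda>p. 0) ((\<lambda>g p. g (p(c := v))) ` ipds f)"
  proof cases
    case 1 then show ?thesis by simp
  next
    case 2
    note g = ipds_props[OF assms 2(1)]
    have cont: "continuous_on UNIV a"
      unfolding 2(2) using g(2)
      by (intro continuous_on_compose2[OF g(2)] cont_upd continuous_on_id continuous_on_const) auto
    show ?thesis
    proof (cases "d = c")
      case True
      have "pd d a = (\<lambda>p. 0)" unfolding 2(2) True by (rule ext, rule pd_eqI) simp
      moreover have "pdiff d a" unfolding 2(2) True by (rule pdiffI) (simp, blast intro: DERIV_const)
      ultimately show ?thesis using cont by simp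
    next
      case False
      have eq: "(p(d := t))(c := v) = (p(c := v))(d := t)" for p :: jpt and t using False by (rule fun_upd_twist)
      have der: "((\<lambda>t. a (p(d := t))) has_field_derivative pd d g (p(c:=v))) (at (p d))" for p
        using pd_has[OF g(1)[of d], of "p(c:=v)"] False unfolding 2(2) eq by simp
      have "pd d a = (\<lambda>p. pd d g (p(c := v)))" by (rule ext, rule pd_eqI, rule der)
      moreover have "pdiff d a" using der by (intro pdiffI) blast
      ultimately show ?thesis using cont g(3)[of d] by blast
    qed
  qed
qed

lemma pd_subst_const:
  assumes "pdiff d f" "d \<noteq> c"
  shows "pd d (\<lambda>p. f (p(c := v))) = (\<lambda>p. pd d f (p(c := v)))"
proof (rule ext, rule pd_eqI)
  fix p :: jpt
  have eq: "(p(d := t))(c := v) = (p(c := v))(d := t)" for t using assms(2) by (rule fun_upd_twist)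
  show "((\<lambda>t. f ((p(d := t))(c := v))) has_field_derivative pd d f (p(c := v))) (at (p d))"
    using pd_has[OF assms(1), of "p(c:=v)"] assms(2) unfolding eq by simp
qed

lemma pd_subst_const_same: "pd c (\<lambda>p. f (p(c := v))) = (\<lambda>p. 0)"
  by (rule ext, rule pd_eqI) simp

subsection \<open>Scaling substitution\<close>

definition Tc :: coord where "Tc = W 0 0"

definition indepT :: "(jpt \<Rightarrow> real) \<Rightarrow> bool" where
  "indepT f \<longleftrightarrow> (\<forall>p t. f (p(Tc := t)) = f p)"

lemma Tc_notin_Cs[simp]: "Tc \<notin> Cs m K" by (simp add: Tc_def)

lemma dep_indepT: "dep m K f \<Longrightarrow> indepT f"
  unfolding indepT_def by (auto intro!: depD[of m K f] simp: Tc_def[symmetric])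

lemma indepT_pd: assumes "indepT g" shows "indepT (pd d g)"
  unfolding indepT_def
proof (intro allI)
  fix p :: jpt and t
  show "pd d g (p(Tc := t)) = pd d g p"
  proof (cases "d = Tc")
    case True
    have "pd Tc g q = 0" for q
      by (rule pd_eqI) (use assms in \<open>simp add: indepT_def\<close>)
    then show ?thesis using True by simp
  next
    case False
    have "(\<lambda>s. g ((p(Tc := t))(d := s))) = (\<lambda>s. g (p(d := s)))"
    proof
      fix s
      have "(p(Tc := t))(d := s) = (p(d := s))(Tc := t)" by (rule fun_upd_twist) (use False in auto)
      then show "g ((p(Tc := t))(d := s)) = g (p(d := s))" using assms by (simp add: indepT_def)
    qed
    then show ?thesis using False unfolding pd_def by simp
  qed
qed

lemma indepT_ipd: "indepT f \<Longrightarrow> indepT (ipd cs f)"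
  by (induction cs) (auto intro: indepT_pd)

lemma indepT_ipds: "indepT f \<Longrightarrow> g \<in> ipds f \<Longrightarrow> indepT g"
  unfolding ipds_def using indepT_ipd by blast

lemma scale_derivs:
  assumes g: "\<And>d. pdiff d g" "indepT g" and c: "c \<noteq> Tc" and Phi: "\<Phi> = (\<lambda>q::jpt. q(c := q Tc * q c))"
  shows "((\<lambda>t. g (\<Phi> (q(d := t)))) has_field_derivative
     (if d = Tc then pd c g (\<Phi> q) * q c else if d = c then pd c g (\<Phi> q) * q Tc else pd d g (\<Phi> q))) (at (q d))"
proof (cases "d = Tc")
  case True
  have eq: "g (\<Phi> (q(d := t))) = g (q(c := t * q c))" for t
  proof -
    have "\<Phi> (q(d := t)) = (q(c := t * q c))(Tc := t)"
      unfolding Phi True using c by (auto simp: fun_eq_iff)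
    then show ?thesis using g(2) by (simp add: indepT_def)
  qed
  have "((\<lambda>t. g (q(c := t * q c))) has_field_derivative pd c g (q(c := q Tc * q c)) * q c) (at (q Tc))"
    by (rule DERIV_chain2[OF pd_line[OF g(1)]]) (auto intro!: derivative_eq_intros)
  then show ?thesis unfolding eq using True by (simp add: Phi)
next
  case F: False
  show ?thesis
  proof (cases "d = c")
    case True
    have eq: "g (\<Phi> (q(d := t))) = g (q(c := q Tc * t))" for t
      unfolding Phi True using c by simp
    have "((\<lambda>t. g (q(c := q Tc * t))) has_field_derivative pd c g (q(c := q Tc * q c)) * q Tc) (at (q c))"
      by (rule DERIV_chain2[OF pd_line[OF g(1)]]) (auto intro!: derivative_eq_intros)
    then show ?thesis unfolding eq using True F by (simp add: Phi)
  next
    case False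
    have eq: "\<Phi> (q(d := t)) = (\<Phi> q)(d := t)" for t
      unfolding Phi using False F by (auto simp: fun_eq_iff)
    show ?thesis unfolding eq using pd_has[OF g(1), of "\<Phi> q" d] False F
      by (simp add: Phi)
  qed
qed

lemma smooth_scale:
  assumes f: "smooth_jet f" "indepT f" and c: "c \<noteq> Tc"
  shows "smooth_jet (\<lambda>q. f (q(c := q Tc * q c)))"
proof (rule alg_smooth[of "(\<lambda>g q. g (q(c := q Tc * q c))) ` ipds f \<union> range (\<lambda>d q. q d)"])
  define \<Phi> where "\<Phi> = (\<lambda>q::jpt. q(c := q Tc * q c))"
  note Phi = \<Phi>_def
  have contPhi: "continuous_on UNIV \<Phi>"
    unfolding Phi by (intro cont_upd continuous_on_id continuous_on_mult continuous_on_product_coordinates)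
  fix a d assume a: "a \<in> (\<lambda>g q. g (q(c := q Tc * q c))) ` ipds f \<union> range (\<lambda>d q. q d)"
  let ?S = "(\<lambda>g q. g (q(c := q Tc * q c))) ` ipds f \<union> range (\<lambda>d q. q d)"
  have "pdiff d a \<and> continuous_on UNIV a \<and> pd d a \<in> alg ?S"
  proof (cases "a \<in> range (\<lambda>d q. q d)")
    case True
    then obtain e where e: "a = (\<lambda>q. q e)" by blast
    show ?thesis unfolding e by (auto intro: alg.const)
  next
    case False
    then obtain g where gi: "g \<in> ipds f" and ag: "a = (\<lambda>q. g (\<Phi> q))" using a unfolding Phi by blast
    note gp = ipds_props[OF f(1) gi]
    have gT: "indepT g" using indepT_ipds[OF f(2) gi] .
    note der = scale_derivs[OF gp(1) gT c Phi]
    have pdiff: "pdiff d a" unfolding ag using der by (intro pdiffI) blast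
    have pdeq: "pd d a = (\<lambda>q. if d = Tc then pd c g (\<Phi> q) * q c else if d = c then pd c g (\<Phi> q) * q Tc else pd d g (\<Phi> q))"
      unfolding ag by (rule ext, rule pd_eqI, rule der)
    have inS: "(\<lambda>q. pd e g (\<Phi> q)) \<in> alg ?S" for e
      using gp(3)[of e] unfolding Phi by (intro alg.atom) blast
    have co: "(\<lambda>q. q e) \<in> alg ?S" for e by (intro alg.atom) blast
    have "pd d a \<in> alg ?S"
      unfolding pdeq using alg.mult[OF inS co] inS by (cases "d = Tc"; cases "d = c") auto
    moreover have "continuous_on UNIV a"
      unfolding ag by (rule continuous_on_compose2[OF gp(2) contPhi]) auto
    ultimately show ?thesis using pdiff by blast
  qed
  then show "pdiff d a" "continuous_on UNIV a" "pd d a \<in> alg ?S" by auto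
next
  show "(\<lambda>q. f (q(c := q Tc * q c))) \<in> alg ((\<lambda>g q. g (q(c := q Tc * q c))) ` ipds f \<union> range (\<lambda>d q. q d))"
    by (intro alg.atom) (use ipds_self in blast)
qed

subsection \<open>Integration over the auxiliary coordinate\<close>

definition Intg :: "(jpt \<Rightarrow> real) \<Rightarrow> jpt \<Rightarrow> real" where
  "Intg g p = integral {0..1} (\<lambda>t. g (p(Tc := t)))"

lemma cont_pair_upd: "continuous_on S (\<lambda>z::jpt \<times> real. (fst z)(Tc := snd z))"
  by (intro cont_upd continuous_on_fst continuous_on_snd continuous_on_id)

lemma Intg_cont:
  assumes "smooth_jet g"
  shows "continuous_on UNIV (Intg g)"
proof -
  have "continuous_on (UNIV \<times> cbox 0 1) (\<lambda>z::jpt \<times> real. g ((fst z)(Tc := snd z)))"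
    by (rule cont_comp_smooth[OF assms cont_pair_upd])
  then have "continuous_on (UNIV \<times> cbox 0 1) (\<lambda>(x::jpt, t::real). g (x(Tc := t)))"
    by (simp add: case_prod_beta)
  from integral_continuous_on_param[OF this] show ?thesis
    unfolding Intg_def by (simp add: cbox_interval)
qed

lemma Intg_deriv:
  assumes g: "smooth_jet g" and d: "d \<noteq> Tc"
  shows "((\<lambda>x. Intg g (p(d := x))) has_field_derivative Intg (pd d g) p) (at (p d))"
proof -
  have tw: "(p(d := x))(Tc := t) = (p(Tc := t))(d := x)" for x t
    by (rule fun_upd_twist) (use d in auto)
  have cmap: "continuous_on S (\<lambda>z::real \<times> real. (p(d := fst z))(Tc := snd z))" for S
    by (intro cont_upd continuous_on_fst continuous_on_snd continuous_on_const continuous_on_id)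
  have contfx: "continuous_on (UNIV \<times> cbox 0 1) (\<lambda>(x, t). pd d g ((p(d := x))(Tc := t)))"
    using cont_comp_smooth[OF smooth_pd[OF g] cmap] by (simp add: case_prod_beta)
  have contf: "continuous_on (cbox 0 1) (\<lambda>t. g ((p(d := x))(Tc := t)))" for x
    by (rule cont_comp_smooth[OF g]) (intro cont_upd continuous_on_id continuous_on_const)
  have "((\<lambda>x. integral (cbox 0 1) (\<lambda>t. g ((p(d := x))(Tc := t)))) has_field_derivative
        integral (cbox 0 1) (\<lambda>t. pd d g ((p(d := p d))(Tc := t)))) (at (p d) within UNIV)"
  proof (rule leibniz_rule_field_derivative[where fx = "\<lambda>x t. pd d g ((p(d := x))(Tc := t))"])
    fix x t :: real
    show "((\<lambda>x. g ((p(d := x))(Tc := t))) has_field_derivative pd d g ((p(d := x))(Tc := t))) (at x within UNIV)"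
      unfolding tw using pd_line[OF smooth_pdiff[OF g], of "p(Tc := t)" d x] by simp
  next
    fix x :: real
    show "(\<lambda>t. g ((p(d := x))(Tc := t))) integrable_on cbox 0 1"
      by (rule integrable_continuous[OF contf])
  qed (use contfx in auto)
  then show ?thesis unfolding Intg_def by (simp add: cbox_interval)
qed

lemma pd_Intg: "smooth_jet g \<Longrightarrow> d \<noteq> Tc \<Longrightarrow> pd d (Intg g) = Intg (pd d g)"
  by (rule ext, rule pd_eqI, rule Intg_deriv)

lemma pd_Intg_T: "pd Tc (Intg g) = (\<lambda>p. 0)"
  by (rule ext, rule pd_eqI) (simp add: Intg_def)

lemma pdiff_Intg: "smooth_jet g \<Longrightarrow> pdiff d (Intg g)"
proof (rule pdiffI)
  fix p assume g: "smooth_jet g"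
  show "\<exists>D. ((\<lambda>t. Intg g (p(d := t))) has_field_derivative D) (at (p d))"
  proof (cases "d = Tc")
    case True then show ?thesis by (auto simp: Intg_def intro: DERIV_const)
  next
    case False then show ?thesis using Intg_deriv[OF g False] by blast
  qed
qed

lemma smooth_Intg:
  assumes g: "smooth_jet g"
  shows "smooth_jet (Intg g)"
proof (rule smooth_jetI2[of _ "insert (\<lambda>p. 0) (Intg ` ipds g)"])
  show "Intg g \<in> insert (\<lambda>p. 0) (Intg ` ipds g)" using ipds_self by blast
next
  fix a d assume "a \<in> insert (\<lambda>p. 0) (Intg ` ipds g)"
  then consider "a = (\<lambda>p. 0)" | h where "h \<in> ipds g" "a = Intg h" by blast
  then show "pdiff d a \<and> continuous_on UNIV a \<and> pd d a \<in> insert (\<lambda>p. 0) (Intg ` ipds g)"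
  proof cases
    case 1 then show ?thesis by simp
  next
    case 2
    have hs: "smooth_jet h" using 2(1) smooth_ipd[OF g] unfolding ipds_def by blast
    have "pd d a \<in> insert (\<lambda>p. 0) (Intg ` ipds g)"
    proof (cases "d = Tc")
      case True then show ?thesis unfolding 2(2) by (simp add: pd_Intg_T)
    next
      case False then show ?thesis unfolding 2(2) pd_Intg[OF hs False]
        using ipds_props(3)[OF g 2(1)] by blast
    qed
    then show ?thesis unfolding 2(2) using pdiff_Intg[OF hs] Intg_cont[OF hs] by blast
  qed
qed



lemma schwarz_mvt:
  fixes F F1 F2 F12 F21 :: "real \<Rightarrow> real \<Rightarrow> real"
  assumes d1: "\<And>x y. ((\<lambda>x. F x y) has_field_derivative F1 x y) (at x)"
    and d2: "\<And>x y. ((\<lambda>y. F x y) has_field_derivative F2 x y) (at y)"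
    and d12: "\<And>x y. ((\<lambda>y. F1 x y) has_field_derivative F12 x y) (at y)"
    and d21: "\<And>x y. ((\<lambda>x. F2 x y) has_field_derivative F21 x y) (at x)"
    and h: "h > 0"
  shows "\<exists>\<xi> \<eta> \<xi>' \<eta>'. a < \<xi> \<and> \<xi> < a + h \<and> b < \<eta> \<and> \<eta> < b + h \<and> a < \<xi>' \<and> \<xi>' < a + h \<and>
     b < \<eta>' \<and> \<eta>' < b + h \<and> F12 \<xi> \<eta> = F21 \<xi>' \<eta>'"
proof -
  define \<Delta> where "\<Delta> = F (a+h) (b+h) - F (a+h) b - F a (b+h) + F a b"
  have ah: "a < a + h" "b < b + h" using h by auto
  have D1: "((\<lambda>x. F x (b+h) - F x b) has_field_derivative F1 x (b+h) - F1 x b) (at x)" for x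
    by (intro DERIV_diff d1)
  have D2: "((\<lambda>y. F (a+h) y - F a y) has_field_derivative F2 (a+h) y - F2 a y) (at y)" for y
    by (intro DERIV_diff d2)
  obtain \<xi> where \<xi>: "a < \<xi>" "\<xi> < a + h"
    "(F (a+h) (b+h) - F (a+h) b) - (F a (b+h) - F a b) = (a + h - a) * (F1 \<xi> (b+h) - F1 \<xi> b)"
    using MVT2[OF ah(1) D1] by blast
  obtain \<eta> where \<eta>: "b < \<eta>" "\<eta> < b + h" "F1 \<xi> (b+h) - F1 \<xi> b = (b + h - b) * F12 \<xi> \<eta>"
    using MVT2[OF ah(2), of "\<lambda>y. F1 \<xi> y" "\<lambda>y. F12 \<xi> y"] d12 by blast
  obtain \<eta>' where \<eta>': "b < \<eta>'" "\<eta>' < b + h"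
    "(F (a+h) (b+h) - F a (b+h)) - (F (a+h) b - F a b) = (b + h - b) * (F2 (a+h) \<eta>' - F2 a \<eta>')"
    using MVT2[OF ah(2) D2] by blast
  obtain \<xi>' where \<xi>': "a < \<xi>'" "\<xi>' < a + h" "F2 (a+h) \<eta>' - F2 a \<eta>' = (a + h - a) * F21 \<xi>' \<eta>'"
    using MVT2[OF ah(1), of "\<lambda>x. F2 x \<eta>'" "\<lambda>x. F21 x \<eta>'"] d21 by blast
  have "h * (h * F12 \<xi> \<eta>) = h * (h * F21 \<xi>' \<eta>')"
    using \<xi>(3) \<eta>(3) \<eta>'(3) \<xi>'(3) by (simp add: algebra_simps)
  then have "F12 \<xi> \<eta> = F21 \<xi>' \<eta>'" using h by simp
  then show ?thesis using \<xi> \<eta> \<xi>' \<eta>' by blast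
qed

lemma seq_to:
  fixes X :: "nat \<Rightarrow> real"
  assumes "\<And>n. a < X n" "\<And>n. X n < a + 1 / real (Suc n)"
  shows "X \<longlonglongrightarrow> a"
proof (rule tendsto_sandwich[of "\<lambda>n. a" X sequentially "\<lambda>n. a + 1 / real (Suc n)"])
  show "\<forall>\<^sub>F n in sequentially. a \<le> X n" using assms(1) by (simp add: less_imp_le)
  show "\<forall>\<^sub>F n in sequentially. X n \<le> a + 1 / real (Suc n)" using assms(2) by (simp add: less_imp_le)
  have "(\<lambda>n. a + inverse (real (Suc n))) \<longlonglongrightarrow> a + 0"
    by (intro tendsto_add tendsto_const LIMSEQ_inverse_real_of_nat)
  then show "(\<lambda>n. a + 1 / real (Suc n)) \<longlonglongrightarrow> a" by (simp add: inverse_eq_divide)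
qed auto

lemma schwarz_real:
  fixes F Fx Fy Fxy Fyx :: "real \<Rightarrow> real \<Rightarrow> real"
  assumes d1: "\<And>x y. ((\<lambda>x. F x y) has_field_derivative Fx x y) (at x)"
    and d2: "\<And>x y. ((\<lambda>y. F x y) has_field_derivative Fy x y) (at y)"
    and d12: "\<And>x y. ((\<lambda>y. Fx x y) has_field_derivative Fxy x y) (at y)"
    and d21: "\<And>x y. ((\<lambda>x. Fy x y) has_field_derivative Fyx x y) (at x)"
    and c12: "continuous_on UNIV (\<lambda>z. Fxy (fst z) (snd z))"
    and c21: "continuous_on UNIV (\<lambda>z. Fyx (fst z) (snd z))"
  shows "Fxy a b = Fyx a b"
proof -
  have "\<forall>n. \<exists>z. a < fst z \<and> fst z < a + 1 / real (Suc n) \<and> b < fst (snd z) \<and> fst (snd z) < b + 1 / real (Suc n) \<and>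
      a < fst (snd (snd z)) \<and> fst (snd (snd z)) < a + 1 / real (Suc n) \<and>
      b < snd (snd (snd z)) \<and> snd (snd (snd z)) < b + 1 / real (Suc n) \<and>
      Fxy (fst z) (fst (snd z)) = Fyx (fst (snd (snd z))) (snd (snd (snd z)))"
  proof
    fix n :: nat
    obtain \<xi> \<eta> \<xi>' \<eta>' where H: "a < \<xi>" "\<xi> < a + 1 / real (Suc n)" "b < \<eta>" "\<eta> < b + 1 / real (Suc n)"
      "a < \<xi>'" "\<xi>' < a + 1 / real (Suc n)" "b < \<eta>'" "\<eta>' < b + 1 / real (Suc n)" "Fxy \<xi> \<eta> = Fyx \<xi>' \<eta>'"
      using schwarz_mvt[OF d1 d2 d12 d21, of "1 / real (Suc n)" a b] by auto
    show "\<exists>z. a < fst z \<and> fst z < a + 1 / real (Suc n) \<and> b < fst (snd z) \<and> fst (snd z) < b + 1 / real (Suc n) \<and>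
      a < fst (snd (snd z)) \<and> fst (snd (snd z)) < a + 1 / real (Suc n) \<and>
      b < snd (snd (snd z)) \<and> snd (snd (snd z)) < b + 1 / real (Suc n) \<and>
      Fxy (fst z) (fst (snd z)) = Fyx (fst (snd (snd z))) (snd (snd (snd z)))"
      by (rule exI[of _ "(\<xi>, \<eta>, \<xi>', \<eta>')"]) (use H in simp)
  qed
  then obtain Z where Z: "\<And>n. a < fst (Z n) \<and> fst (Z n) < a + 1 / real (Suc n) \<and> b < fst (snd (Z n)) \<and> fst (snd (Z n)) < b + 1 / real (Suc n) \<and>
      a < fst (snd (snd (Z n))) \<and> fst (snd (snd (Z n))) < a + 1 / real (Suc n) \<and>
      b < snd (snd (snd (Z n))) \<and> snd (snd (snd (Z n))) < b + 1 / real (Suc n) \<and>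
      Fxy (fst (Z n)) (fst (snd (Z n))) = Fyx (fst (snd (snd (Z n)))) (snd (snd (snd (Z n))))"
    using choice[of "\<lambda>n z. a < fst z \<and> fst z < a + 1 / real (Suc n) \<and> b < fst (snd z) \<and> fst (snd z) < b + 1 / real (Suc n) \<and>
      a < fst (snd (snd z)) \<and> fst (snd (snd z)) < a + 1 / real (Suc n) \<and>
      b < snd (snd (snd z)) \<and> snd (snd (snd z)) < b + 1 / real (Suc n) \<and>
      Fxy (fst z) (fst (snd z)) = Fyx (fst (snd (snd z))) (snd (snd (snd z)))"] by blast
  have l1: "(\<lambda>n. (fst (Z n), fst (snd (Z n)))) \<longlonglongrightarrow> (a, b)"
    by (intro tendsto_Pair seq_to) (use Z in auto)
  have l2: "(\<lambda>n. (fst (snd (snd (Z n))), snd (snd (snd (Z n))))) \<longlonglongrightarrow> (a, b)"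
    by (intro tendsto_Pair seq_to) (use Z in auto)
  have ic12: "isCont (\<lambda>z. Fxy (fst z) (snd z)) (a, b)"
    using c12 continuous_on_eq_continuous_at[OF open_UNIV] by blast
  have ic21: "isCont (\<lambda>z. Fyx (fst z) (snd z)) (a, b)"
    using c21 continuous_on_eq_continuous_at[OF open_UNIV] by blast
  have t1: "(\<lambda>n. Fxy (fst (Z n)) (fst (snd (Z n)))) \<longlonglongrightarrow> Fxy a b"
    using isCont_tendsto_compose[OF ic12 l1] by simp
  have t2: "(\<lambda>n. Fyx (fst (snd (snd (Z n)))) (snd (snd (snd (Z n))))) \<longlonglongrightarrow> Fyx a b"
    using isCont_tendsto_compose[OF ic21 l2] by simp
  have "(\<lambda>n. Fxy (fst (Z n)) (fst (snd (Z n)))) = (\<lambda>n. Fyx (fst (snd (snd (Z n)))) (snd (snd (snd (Z n)))))"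
    using Z by blast
  with t1 t2 show ?thesis using LIMSEQ_unique by metis
qed

lemma schwarz:
  assumes f: "smooth_jet f"
  shows "pd c (pd d f) = pd d (pd c f)"
proof (cases "c = d")
  case True then show ?thesis by simp
next
  case cd: False
  show ?thesis
  proof
    fix p :: jpt
    define P where "P = (\<lambda>x y. (p(c := x))(d := y))"
    have Ptw: "P x y = (p(d := y))(c := x)" for x y
      unfolding P_def by (rule fun_upd_twist) (use cd in auto)
    have Px: "(P x y)(c := s) = P s y" for x y s unfolding Ptw by simp
    have Py: "(P x y)(d := s) = P x s" for x y s unfolding P_def by simp
    have Pc: "P x y c = x" for x y unfolding Ptw by simp
    have Pd: "P x y d = y" for x y unfolding P_def by simp
    have lx: "((\<lambda>x. g (P x y)) has_field_derivative pd c g (P x y)) (at x)" if "smooth_jet g" for g x y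
      using pd_has[OF smooth_pdiff[OF that], of "P x y" c] unfolding Px Pc .
    have ly: "((\<lambda>y. g (P x y)) has_field_derivative pd d g (P x y)) (at y)" if "smooth_jet g" for g x y
      using pd_has[OF smooth_pdiff[OF that], of "P x y" d] unfolding Py Pd .
    have cP: "continuous_on UNIV (\<lambda>z::real\<times>real. P (fst z) (snd z))"
      unfolding P_def by (intro cont_upd continuous_on_fst continuous_on_snd continuous_on_const continuous_on_id)
    have "pd d (pd c f) (P (p c) (p d)) = pd c (pd d f) (P (p c) (p d))"
    proof (rule schwarz_real[where F = "\<lambda>x y. f (P x y)" and Fx = "\<lambda>x y. pd c f (P x y)"
          and Fy = "\<lambda>x y. pd d f (P x y)" and Fxy = "\<lambda>x y. pd d (pd c f) (P x y)"
          and Fyx = "\<lambda>x y. pd c (pd d f) (P x y)"])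
      show "continuous_on UNIV (\<lambda>z. pd d (pd c f) (P (fst z) (snd z)))"
        by (rule cont_comp_smooth[OF smooth_pd[OF smooth_pd[OF f]] cP])
      show "continuous_on UNIV (\<lambda>z. pd c (pd d f) (P (fst z) (snd z)))"
        by (rule cont_comp_smooth[OF smooth_pd[OF smooth_pd[OF f]] cP])
    qed (intro lx ly smooth_pd f)+
    moreover have "P (p c) (p d) = p" unfolding P_def by simp
    ultimately show "pd c (pd d f) p = pd d (pd c f) p" by simp
  qed
qed



lemma Sum_any_fin:
  fixes g :: "nat \<Rightarrow> real"
  assumes "\<And>r. r > N \<Longrightarrow> g r = 0"
  shows "Sum_any g = (\<Sum>r\<le>N. g r)"
proof (rule Sum_any.expand_superset)
  show "{a. g a \<noteq> 0} \<subseteq> {..N}" using assms by (auto simp: not_le[symmetric])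
qed simp

definition DxF :: "nat \<Rightarrow> nat \<Rightarrow> (jpt \<Rightarrow> real) \<Rightarrow> jpt \<Rightarrow> real" where
  "DxF m N f = (\<lambda>p. pd X f p + (\<Sum>j=1..m. \<Sum>r\<le>N. p (W j (Suc r)) * pd (W j r) f p))"

lemma Dx_eq:
  assumes "dep m N f"
  shows "Dx m f = DxF m N f"
proof
  fix p
  have "Sum_any (\<lambda>r. p (W j (Suc r)) * pd (W j r) f p) = (\<Sum>r\<le>N. p (W j (Suc r)) * pd (W j r) f p)"
    if "j \<in> {1..m}" for j
    by (rule Sum_any_fin) (use pd_zero_outside[OF assms] that in simp)
  then show "Dx m f p = DxF m N f p"
    unfolding Dx_def DxF_def by (intro arg_cong2[where f = "(+)"] refl sum.cong) auto
qed

lemma smooth_DxF: "smooth_jet f \<Longrightarrow> smooth_jet (DxF m N f)"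
  unfolding DxF_def by (intro smooth_add smooth_sum smooth_mult smooth_pd smooth_coord)

lemma dep_DxF: assumes "dep m K f" "N \<le> K" shows "dep m (Suc K) (DxF m N f)"
  unfolding DxF_def
  using assms
  by (intro dep_add dep_sum dep_mult dep_coord dep_pd)
     (auto intro: dep_mono[of K "Suc K"])

lemma Dx_props:
  assumes "smooth_jet f" "dep m K f"
  shows "smooth_jet (Dx m f)" "dep m (Suc K) (Dx m f)"
  using smooth_DxF[OF assms(1)] dep_DxF[OF assms(2) order_refl] Dx_eq[OF assms(2)] by auto

lemma Dxn_props:
  assumes "smooth_jet f" "dep m K f"
  shows "smooth_jet ((Dx m ^^ n) f) \<and> dep m (K + n) ((Dx m ^^ n) f)"
  by (induction n) (use assms Dx_props in auto)

lemma pd_lin: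
  assumes "pdiff c f" "pdiff c g"
  shows "pd c (\<lambda>p. a * f p + b * g p) = (\<lambda>p. a * pd c f p + b * pd c g p)"
  by (rule ext, rule pd_eqI) (auto intro!: derivative_eq_intros pd_has[OF assms(1)] pd_has[OF assms(2)])

lemma Dx_lin:
  assumes "smooth_jet f" "smooth_jet g" "dep m K f" "dep m K g"
  shows "Dx m (\<lambda>p. a * f p + b * g p) = (\<lambda>p. a * Dx m f p + b * Dx m g p)"
proof -
  have d: "dep m K (\<lambda>p. a * f p + b * g p)"
    using assms by (intro dep_add dep_mult dep_const) auto
  have pl: "pd c (\<lambda>p. a * f p + b * g p) = (\<lambda>p. a * pd c f p + b * pd c g p)" for c
    by (rule pd_lin) (use assms smooth_pdiff in auto)
  show ?thesis
    unfolding Dx_eq[OF d] Dx_eq[OF assms(3)] Dx_eq[OF assms(4)] DxF_def pl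
    by (simp add: sum.distrib sum_distrib_left algebra_simps)
qed

lemma Dxn_lin:
  assumes "smooth_jet f" "smooth_jet g" "dep m K f" "dep m K g"
  shows "(Dx m ^^ n) (\<lambda>p. a * f p + b * g p) = (\<lambda>p. a * (Dx m ^^ n) f p + b * (Dx m ^^ n) g p)"
proof (induction n)
  case (Suc n)
  have "(Dx m ^^ Suc n) (\<lambda>p. a * f p + b * g p) = Dx m (\<lambda>p. a * (Dx m ^^ n) f p + b * (Dx m ^^ n) g p)"
    using Suc by simp
  also have "\<dots> = (\<lambda>p. a * (Dx m ^^ Suc n) f p + b * (Dx m ^^ Suc n) g p)"
    using Dxn_props[OF assms(1,3), of n] Dxn_props[OF assms(2,4), of n]
    by (simp add: Dx_lin[of _ _ m "K + n"])
  finally show ?case .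
qed simp

lemma Dx_zero: "Dx m (\<lambda>p. 0) = (\<lambda>p. 0)"
  unfolding Dx_def by simp

lemma Dxn_zero: "(Dx m ^^ n) (\<lambda>p. 0) = (\<lambda>p. 0)"
  by (induction n) (simp_all add: Dx_zero)

lemma EL_fin:
  assumes "dep m K f"
  shows "EL m j f = (\<lambda>p. \<Sum>r\<le>K. (-1) ^ r * (Dx m ^^ r) (pd (W j r) f) p)"
proof
  fix p
  have z: "pd (W j r) f = (\<lambda>p. 0)" if "r > K" for r
    using pd_zero_outside[OF assms] that by (auto simp: fun_eq_iff)
  show "EL m j f p = (\<Sum>r\<le>K. (-1) ^ r * (Dx m ^^ r) (pd (W j r) f) p)"
    unfolding EL_def by (rule Sum_any_fin) (simp add: z Dxn_zero)
qed

lemma pd_DxF: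
  assumes h: "smooth_jet h"
  shows "pd c (DxF m N h) = (\<lambda>p. pd c (pd X h) p + (\<Sum>j=1..m. \<Sum>r\<le>N.
     (if c = W j (Suc r) then 1 else 0) * pd (W j r) h p + p (W j (Suc r)) * pd c (pd (W j r) h) p))"
proof -
  have pdh: "pdiff c (pd e h)" for e using smooth_pdiff[OF smooth_pd[OF h]] .
  have t: "pd c (\<lambda>p. p (W j (Suc r)) * pd (W j r) h p) =
     (\<lambda>p. (if c = W j (Suc r) then 1 else 0) * pd (W j r) h p + p (W j (Suc r)) * pd c (pd (W j r) h) p)" for j r
    by (subst pd_mult) (auto simp: pdh)
  have pt: "pdiff c (\<lambda>p. p (W j (Suc r)) * pd (W j r) h p)" for j r
    by (intro pdiff_mult pdiff_coord pdh)
  have s1: "pd c (\<lambda>p. \<Sum>r\<le>N. p (W j (Suc r)) * pd (W j r) h p) =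
     (\<lambda>p. \<Sum>r\<le>N. (if c = W j (Suc r) then 1 else 0) * pd (W j r) h p + p (W j (Suc r)) * pd c (pd (W j r) h) p)" for j
    by (subst pd_sum) (auto simp: pt t)
  have ps1: "pdiff c (\<lambda>p. \<Sum>r\<le>N. p (W j (Suc r)) * pd (W j r) h p)" for j
    by (intro pdiff_sum pt)
  have s2: "pd c (\<lambda>p. \<Sum>j=1..m. \<Sum>r\<le>N. p (W j (Suc r)) * pd (W j r) h p) =
    (\<lambda>p. \<Sum>j=1..m. \<Sum>r\<le>N. (if c = W j (Suc r) then 1 else 0) * pd (W j r) h p + p (W j (Suc r)) * pd c (pd (W j r) h) p)"
    by (subst pd_sum) (auto simp: ps1 s1)
  have ps2: "pdiff c (\<lambda>p. \<Sum>j=1..m. \<Sum>r\<le>N. p (W j (Suc r)) * pd (W j r) h p)"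
    by (intro pdiff_sum ps1)
  show ?thesis unfolding DxF_def pd_add[OF pdh ps2] s2 ..
qed

lemma sum_delta_nat:
  fixes F :: "nat \<Rightarrow> nat \<Rightarrow> real"
  assumes "i \<in> {1..m}" "s \<le> N"
  shows "(\<Sum>j=1..m. \<Sum>r\<le>N. (if i = j \<and> s = r then F j r else 0)) = F i s"
proof -
  have "(\<Sum>j=1..m. \<Sum>r\<le>N. (if i = j \<and> s = r then F j r else 0)) =
        (\<Sum>j=1..m. if i = j then F j s else 0)"
    by (rule sum.cong) (use assms in auto)
  also have "\<dots> = F i s" using assms by simp
  finally show ?thesis .
qed

lemma pd_top:
  assumes h: "smooth_jet h" "dep m s h" and i: "i \<in> {1..m}"
  shows "pd (W i (Suc s)) (Dx m h) = pd (W i s) h"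
proof
  fix p
  have z1: "pd (W i (Suc s)) (pd X h) p = 0"
    by (rule pd_zero_outside[OF dep_pd[OF h(2)]]) simp
  have z2: "pd (W i (Suc s)) (pd (W j r) h) p = 0" for j r
    by (rule pd_zero_outside[OF dep_pd[OF h(2)]]) simp
  have "pd (W i (Suc s)) (Dx m h) p = (\<Sum>j=1..m. \<Sum>r\<le>s. (if i = j \<and> s = r then pd (W j r) h p else 0))"
    unfolding Dx_eq[OF h(2)] pd_DxF[OF h(1)] z1 z2 by (auto intro!: sum.cong)
  also have "\<dots> = pd (W i s) h p" by (rule sum_delta_nat[OF i order_refl])
  finally show "pd (W i (Suc s)) (Dx m h) p = pd (W i s) h p" .
qed

lemma pd_topn:
  assumes h: "smooth_jet h" "dep m s h" and i: "i \<in> {1..m}"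
  shows "pd (W i (s + n)) ((Dx m ^^ n) h) = pd (W i s) h"
proof (induction n)
  case (Suc n)
  have "pd (W i (s + Suc n)) ((Dx m ^^ Suc n) h) = pd (W i (Suc (s + n))) (Dx m ((Dx m ^^ n) h))" by simp
  also have "\<dots> = pd (W i (s + n)) ((Dx m ^^ n) h)"
    using Dxn_props[OF h, of n] by (intro pd_top i) auto
  finally show ?case using Suc by simp
qed simp

lemma pd_Dx_comm:
  assumes B: "smooth_jet B" "dep m K B" and j: "j \<in> {1..m}"
  shows "pd (W j r) (Dx m B) = (\<lambda>p. Dx m (pd (W j r) B) p + (if r = 0 then 0 else pd (W j (r - 1)) B p))"
proof
  fix p
  let ?c = "W j r"
  have sch: "pd ?c (pd e B) = pd e (pd ?c B)" for e by (rule schwarz[OF B(1)])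
  have dsum: "(\<Sum>i=1..m. \<Sum>s\<le>K. (if ?c = W i (Suc s) then 1 else 0) * pd (W i s) B p) =
      (if r = 0 then 0 else pd (W j (r - 1)) B p)"
  proof (cases r)
    case 0 then show ?thesis by simp
  next
    case (Suc r')
    show ?thesis
    proof (cases "r' \<le> K")
      case True
      have "(\<Sum>i=1..m. \<Sum>s\<le>K. (if ?c = W i (Suc s) then 1 else 0) * pd (W i s) B p) =
            (\<Sum>i=1..m. \<Sum>s\<le>K. (if j = i \<and> r' = s then pd (W i s) B p else 0))"
        using Suc by (intro sum.cong) auto
      also have "\<dots> = pd (W j r') B p" by (rule sum_delta_nat[OF j True])
      finally show ?thesis using Suc by simp
    next
      case False
      have "pd (W j r') B p = 0" by (rule pd_zero_outside[OF B(2)]) (use False in simp)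
      moreover have "(\<Sum>i=1..m. \<Sum>s\<le>K. (if ?c = W i (Suc s) then 1 else 0) * pd (W i s) B p) = 0"
        using Suc False by (intro sum.neutral ballI) auto
      ultimately show ?thesis using Suc by simp
    qed
  qed
  have "pd ?c (Dx m B) p = pd X (pd ?c B) p + (\<Sum>i=1..m. \<Sum>s\<le>K.
     (if ?c = W i (Suc s) then 1 else 0) * pd (W i s) B p + p (W i (Suc s)) * pd (W i s) (pd ?c B) p)"
    unfolding Dx_eq[OF B(2)] pd_DxF[OF B(1)] sch ..
  also have "\<dots> = DxF m K (pd ?c B) p + (\<Sum>i=1..m. \<Sum>s\<le>K. (if ?c = W i (Suc s) then 1 else 0) * pd (W i s) B p)"
    unfolding DxF_def by (simp add: sum.distrib)
  also have "\<dots> = Dx m (pd ?c B) p + (if r = 0 then 0 else pd (W j (r - 1)) B p)"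
    unfolding dsum Dx_eq[OF dep_pd[OF B(2)]] ..
  finally show "pd ?c (Dx m B) p = Dx m (pd ?c B) p + (if r = 0 then 0 else pd (W j (r - 1)) B p)" .
qed



lemma fp_suc: "(f ^^ Suc n) x = (f ^^ n) (f x)"
  by (induction n) auto

lemma alt_tele:
  fixes a :: "nat \<Rightarrow> real"
  shows "(\<Sum>r\<le>N. (-1) ^ r * (a r + (if r = 0 then 0 else a (r - 1)))) = (-1) ^ N * a N"
  by (induction N) (auto simp: algebra_simps)

lemma EL_Dx_zero:
  assumes B: "smooth_jet B" "dep m K B" and j: "j \<in> {1..m}"
  shows "EL m j (Dx m B) = (\<lambda>p. 0)"
proof
  fix p
  define u where "u r = pd (W j r) B" for r
  have us: "smooth_jet (u r)" "dep m K (u r)" for r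
    unfolding u_def using B by (auto intro: smooth_pd dep_pd)
  have DB: "smooth_jet (Dx m B)" "dep m (Suc K) (Dx m B)" using Dx_props[OF B] by auto
  have comm: "pd (W j r) (Dx m B) = (\<lambda>p. 1 * Dx m (u r) p + 1 * (if r = 0 then (\<lambda>p. 0) else u (r - 1)) p)" for r
    unfolding pd_Dx_comm[OF B j] u_def by auto
  have tm: "(Dx m ^^ r) (pd (W j r) (Dx m B)) p =
      (Dx m ^^ Suc r) (u r) p + (if r = 0 then 0 else (Dx m ^^ Suc (r - 1)) (u (r - 1)) p)" for r
  proof -
    have s2: "smooth_jet (if r = 0 then (\<lambda>p. 0) else u (r - 1))" "dep m (Suc K) (if r = 0 then (\<lambda>p. 0) else u (r - 1))"
      using us by (auto intro: dep_mono[of K])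
    have "(Dx m ^^ r) (pd (W j r) (Dx m B)) = (\<lambda>p. 1 * (Dx m ^^ r) (Dx m (u r)) p + 1 * (Dx m ^^ r) (if r = 0 then (\<lambda>p. 0) else u (r - 1)) p)"
      unfolding comm
      by (rule Dxn_lin[of _ _ m "Suc K"]) (use Dx_props[OF us] s2 in auto)
    then show ?thesis
      by (cases r) (simp_all only: fp_suc, auto simp: Dxn_zero)
  qed
  have "EL m j (Dx m B) p = (\<Sum>r\<le>Suc K. (-1) ^ r * (Dx m ^^ r) (pd (W j r) (Dx m B)) p)"
    unfolding EL_fin[OF DB(2)] ..
  also have "\<dots> = (\<Sum>r\<le>Suc K. (-1) ^ r * ((Dx m ^^ Suc r) (u r) p + (if r = 0 then 0 else (Dx m ^^ Suc (r - 1)) (u (r - 1)) p)))"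
    unfolding tm ..
  also have "\<dots> = (-1) ^ Suc K * (Dx m ^^ Suc (Suc K)) (u (Suc K)) p"
    by (rule alt_tele[where a = "\<lambda>r. (Dx m ^^ Suc r) (u r) p"])
  also have "u (Suc K) = (\<lambda>p. 0)"
    unfolding u_def using pd_zero_outside[OF B(2)] by auto
  finally show "EL m j (Dx m B) p = 0" by (simp add: Dxn_zero Dx_zero)
qed

lemma EL_lin:
  assumes "smooth_jet f" "smooth_jet g" "dep m K f" "dep m K g"
  shows "EL m j (\<lambda>p. a * f p + b * g p) = (\<lambda>p. a * EL m j f p + b * EL m j g p)"
proof -
  have d: "dep m K (\<lambda>p. a * f p + b * g p)"
    using assms by (intro dep_add dep_mult dep_const) auto
  have pl: "pd c (\<lambda>p. a * f p + b * g p) = (\<lambda>p. a * pd c f p + b * pd c g p)" for c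
    by (rule pd_lin) (use assms smooth_pdiff in auto)
  have dl: "(Dx m ^^ n) (pd c (\<lambda>p. a * f p + b * g p)) = (\<lambda>p. a * (Dx m ^^ n) (pd c f) p + b * (Dx m ^^ n) (pd c g) p)" for n c
    unfolding pl by (rule Dxn_lin[of _ _ m K]) (use assms in \<open>auto intro: smooth_pd dep_pd\<close>)
  show ?thesis
    unfolding EL_fin[OF d] EL_fin[OF assms(3)] EL_fin[OF assms(4)] dl
    by (simp add: sum.distrib sum_distrib_left algebra_simps)
qed



definition zeroset :: "coord set \<Rightarrow> jpt \<Rightarrow> jpt" where
  "zeroset Z p = (\<lambda>c. if c \<in> Z then 0 else p c)"

lemma zeroset_insert: "zeroset (insert c Z) p = zeroset Z (p(c := 0))"
  "zeroset (insert c Z) p = (zeroset Z p)(c := 0)"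
  unfolding zeroset_def by auto

lemma zeroset_empty[simp]: "zeroset {} p = p" unfolding zeroset_def by simp

lemma smooth_zeroset:
  assumes "finite Z" "smooth_jet f"
  shows "smooth_jet (\<lambda>p. f (zeroset Z p))"
  using assms(1)
proof (induction Z rule: finite_induct)
  case empty then show ?case using assms by simp
next
  case (insert c Z)
  show ?case unfolding zeroset_insert(1) by (rule smooth_subst_const[OF insert.IH])
qed

lemma inv_zeroset:
  assumes "finite Z" "\<And>c p. c \<in> Z \<Longrightarrow> g (p(c := 0)) = g p"
  shows "g (zeroset Z p) = g p"
  using assms
proof (induction Z arbitrary: p rule: finite_induct)
  case (insert c Z)
  have "g (zeroset (insert c Z) p) = g ((zeroset Z p)(c := 0))" unfolding zeroset_insert(2) ..
  also have "\<dots> = g (zeroset Z p)" by (rule insert.prems) (rule insertI1)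
  also have "\<dots> = g p" using insert by simp
  finally show ?case .
qed simp

lemma const_coord:
  assumes "pdiff c g" "\<And>p. pd c g p = 0"
  shows "g (p(c := t)) = g p"
proof -
  have "g (p(c := t)) = g (p(c := p c))"
    by (rule DERIV_isconst_all[of "\<lambda>s. g (p(c := s))"]) (use pd_line[OF assms(1), of p] assms(2) in auto)
  then show ?thesis by simp
qed

lemma affine_coord:
  assumes "pdiff c f" "\<And>t. pd c f (p(c := t)) = pd c f p"
  shows "f p = f (p(c := 0)) + p c * pd c f p"
proof -
  have "f (p(c := p c)) - p c * pd c f p = f (p(c := 0)) - 0 * pd c f p"
  proof (rule DERIV_isconst_all[of "\<lambda>s. f (p(c := s)) - s * pd c f p"], intro allI)
    fix x
    show "((\<lambda>s. f (p(c := s)) - s * pd c f p) has_field_derivative 0) (at x)"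
    proof -
      have "((\<lambda>s. s * pd c f p) has_field_derivative pd c f p) (at x)" by (auto intro!: derivative_eq_intros)
      from DERIV_diff[OF pd_line[OF assms(1), of p x] this]
      show ?thesis using assms(2)[of x] by simp
    qed
  qed
  then show ?thesis by simp
qed

lemma affine_decomp:
  assumes f: "smooth_jet f" "dep m k f"
    and H: "\<And>i j. i \<in> {1..m} \<Longrightarrow> j \<in> {1..m} \<Longrightarrow> pd (W i k) (pd (W j k) f) = (\<lambda>p. 0)"
  defines "Z \<equiv> (\<lambda>l. W l k) ` {1..m}"
  shows "\<And>i p. i \<in> {1..m} \<Longrightarrow> pd (W i k) f (zeroset Z p) = pd (W i k) f p"
    and "\<And>p. f p = f (zeroset Z p) + (\<Sum>l=1..m. p (W l k) * pd (W l k) f p)"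
proof -
  have fZ: "finite Z" unfolding Z_def by simp
  have pdf: "pdiff c (pd e f)" for c e using smooth_pdiff[OF smooth_pd[OF f(1)]] .
  have inv1: "pd c f (p(d := t)) = pd c f p" if "c \<in> Z" "d \<in> Z" for c d p t
  proof (rule const_coord[OF pdf])
    fix q show "pd d (pd c f) q = 0" using H that unfolding Z_def by auto
  qed
  have inv: "pd c f (zeroset Z p) = pd c f p" if "c \<in> Z" for c p
    by (rule inv_zeroset[OF fZ], erule inv1[OF that])
  then show "\<And>i p. i \<in> {1..m} \<Longrightarrow> pd (W i k) f (zeroset Z p) = pd (W i k) f p"
    unfolding Z_def by blast
  have gen: "Z' \<subseteq> Z \<Longrightarrow> f p = f (zeroset Z' p) + (\<Sum>c\<in>Z'. p c * pd c f p)" for Z' p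
    using finite_subset[OF _ fZ]
  proof (induction Z' rule: infinite_finite_induct)
    case (insert c Z')
    have cZ: "c \<in> Z" "Z' \<subseteq> Z" using insert by auto
    have a1: "f (zeroset Z' p) = f ((zeroset Z' p)(c := 0)) + (zeroset Z' p) c * pd c f (zeroset Z' p)"
    proof (rule affine_coord[OF smooth_pdiff[OF f(1)]])
      fix t show "pd c f ((zeroset Z' p)(c := t)) = pd c f (zeroset Z' p)" by (rule inv1[OF cZ(1) cZ(1)])
    qed
    have a2: "(zeroset Z' p) c = p c" using insert(2) unfolding zeroset_def by simp
    have a3: "pd c f (zeroset Z' p) = pd c f p"
      by (rule inv_zeroset[OF insert(1)], rule inv1[OF cZ(1)], use cZ(2) in blast)
    have A: "f (zeroset Z' p) = f ((zeroset Z' p)(c := 0)) + p c * pd c f p"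
      using a1 unfolding a2 a3 .
    have IH: "f p = f (zeroset Z' p) + (\<Sum>c\<in>Z'. p c * pd c f p)" using insert cZ by blast
    show ?case unfolding zeroset_insert(2) sum.insert[OF insert(1) insert(2)]
      using A IH by linarith
  qed auto
  have inj: "inj_on (\<lambda>l. W l k) {1..m}" by (auto intro: inj_onI)
  have ri: "(\<Sum>c\<in>Z. p c * pd c f p) = (\<Sum>l=1..m. p (W l k) * pd (W l k) f p)" for p
    unfolding Z_def sum.reindex[OF inj] by (simp add: o_def)
  show "\<And>p. f p = f (zeroset Z p) + (\<Sum>l=1..m. p (W l k) * pd (W l k) f p)"
    using gen[OF order_refl] unfolding ri .
qed

lemma dep_zeroset:
  assumes "dep m k g" "k \<ge> 1"
  shows "dep m (k - 1) (\<lambda>p. g (zeroset ((\<lambda>l. W l k) ` {1..m}) p))"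
proof (rule depI)
  fix p q :: jpt assume pq: "\<And>c. c \<in> Cs m (k - 1) \<Longrightarrow> p c = q c"
  show "g (zeroset ((\<lambda>l. W l k) ` {1..m}) p) = g (zeroset ((\<lambda>l. W l k) ` {1..m}) q)"
  proof (rule depD[OF assms(1)])
    fix c assume c: "c \<in> Cs m k"
    show "zeroset ((\<lambda>l. W l k) ` {1..m}) p c = zeroset ((\<lambda>l. W l k) ` {1..m}) q c"
    proof (cases "c \<in> (\<lambda>l. W l k) ` {1..m}")
      case True then show ?thesis unfolding zeroset_def by simp
    next
      case False
      then have "c \<in> Cs m (k - 1)" using c unfolding Cs_def by auto
      then show ?thesis using pq False unfolding zeroset_def by simp
    qed
  qed
qed



lemma ftc01:
  fixes \<phi> \<phi>' :: "real \<Rightarrow> real"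
  assumes "\<And>t. (\<phi> has_field_derivative \<phi>' t) (at t)"
  shows "integral {0..1} \<phi>' = \<phi> 1 - \<phi> 0"
proof -
  have "(\<phi>' has_integral (\<phi> 1 - \<phi> 0)) {0..1::real}"
    by (rule fundamental_theorem_of_calculus)
       (auto simp: has_real_derivative_iff_has_vector_derivative[symmetric] intro: has_field_derivative_at_within assms)
  then show ?thesis by (rule integral_unique)
qed

lemma zs_out: "d \<notin> Z \<Longrightarrow> zeroset Z (p(d := t)) = (zeroset Z p)(d := t)"
  unfolding zeroset_def by auto

lemma zs_in: "d \<in> Z \<Longrightarrow> zeroset Z (p(d := t)) = zeroset Z p"
  unfolding zeroset_def by auto

lemma zs_T: "Tc \<notin> Z \<Longrightarrow> zeroset Z (p(Tc := t)) = (zeroset Z p)(Tc := t)"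
  by (rule zs_out)

lemma pd_zs_out:
  assumes "pdiff d f" "d \<notin> Z"
  shows "pd d (\<lambda>p. f (zeroset Z p)) = (\<lambda>p. pd d f (zeroset Z p))"
proof (rule ext, rule pd_eqI)
  fix p
  show "((\<lambda>t. f (zeroset Z (p(d := t)))) has_field_derivative pd d f (zeroset Z p)) (at (p d))"
    unfolding zs_out[OF assms(2)] using pd_has[OF assms(1), of "zeroset Z p"] assms(2)
    by (simp add: zeroset_def)
qed

lemma pd_zs_in:
  assumes "d \<in> Z"
  shows "pd d (\<lambda>p. f (zeroset Z p)) = (\<lambda>p. 0)"
  by (rule ext, rule pd_eqI) (simp add: zs_in[OF assms])

lemma dep_zs: "dep m K f \<Longrightarrow> dep m K (\<lambda>p. f (zeroset Z p))"
proof (rule depI)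
  fix p q :: jpt assume d: "dep m K f" and pq: "\<And>c. c \<in> Cs m K \<Longrightarrow> p c = q c"
  show "f (zeroset Z p) = f (zeroset Z q)"
    by (rule depD[OF d]) (use pq in \<open>simp add: zeroset_def\<close>)
qed

locale poinc =
  fixes m s :: nat and b :: "nat \<Rightarrow> jpt \<Rightarrow> real"
  assumes b_smooth: "\<And>l. l \<in> {1..m} \<Longrightarrow> smooth_jet (b l)"
    and b_dep: "\<And>l. l \<in> {1..m} \<Longrightarrow> dep m s (b l)"
    and b_sym: "\<And>i l. i \<in> {1..m} \<Longrightarrow> l \<in> {1..m} \<Longrightarrow> pd (W i s) (b l) = pd (W l s) (b i)"
begin

definition cc :: "nat \<Rightarrow> coord" where "cc i = W i s"
definition Zs :: "nat \<Rightarrow> coord set" where "Zs i = cc ` {Suc i..m}"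
definition hh :: "nat \<Rightarrow> jpt \<Rightarrow> real" where "hh i p = b i (zeroset (Zs i) p)"
definition GG :: "nat \<Rightarrow> jpt \<Rightarrow> real" where "GG i q = hh i (q(cc i := q Tc * q (cc i)))"
definition JJ :: "nat \<Rightarrow> jpt \<Rightarrow> real" where "JJ i = Intg (GG i)"
definition BB :: "jpt \<Rightarrow> real" where "BB p = (\<Sum>i=1..m. p (cc i) * JJ i p)"

lemma cc_neq_T[simp]: "i \<in> {1..m} \<Longrightarrow> cc i \<noteq> Tc" by (auto simp: cc_def Tc_def)
lemma cc_inj[simp]: "cc i = cc l \<longleftrightarrow> i = l" by (simp add: cc_def)
lemma cc_in_Zs[simp]: "cc l \<in> Zs i \<longleftrightarrow> Suc i \<le> l \<and> l \<le> m" by (auto simp: Zs_def)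
lemma T_notin_Zs[simp]: "Tc \<notin> Zs i" by (auto simp: Zs_def cc_def Tc_def)
lemma fin_Zs[simp]: "finite (Zs i)" by (simp add: Zs_def)

lemma hh_smooth: "i \<in> {1..m} \<Longrightarrow> smooth_jet (hh i)"
  unfolding hh_def[abs_def] by (rule smooth_zeroset[OF fin_Zs b_smooth])

lemma hh_dep: "i \<in> {1..m} \<Longrightarrow> dep m s (hh i)"
  unfolding hh_def[abs_def] by (rule dep_zs[OF b_dep])

lemma hh_indepT: "i \<in> {1..m} \<Longrightarrow> indepT (hh i)"
  by (rule dep_indepT[OF hh_dep])

lemma GG_smooth: "i \<in> {1..m} \<Longrightarrow> smooth_jet (GG i)"
  unfolding GG_def[abs_def] by (rule smooth_scale[OF hh_smooth hh_indepT cc_neq_T])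

lemma JJ_smooth: "i \<in> {1..m} \<Longrightarrow> smooth_jet (JJ i)"
  unfolding JJ_def by (rule smooth_Intg[OF GG_smooth])

lemma BB_smooth: "smooth_jet BB"
  unfolding BB_def[abs_def] by (intro smooth_sum smooth_mult smooth_coord JJ_smooth) auto

lemma indepT_at:
  assumes "indepT g" "i \<in> {1..m}"
  shows "g ((p(Tc := t))(cc i := (p(Tc := t)) Tc * (p(Tc := t)) (cc i))) = g (p(cc i := t * p (cc i)))"
proof -
  have "(p(Tc := t))(cc i := (p(Tc := t)) Tc * (p(Tc := t)) (cc i)) = (p(cc i := t * p (cc i)))(Tc := t)"
    using assms(2) by (auto simp: fun_eq_iff)
  then show ?thesis using assms(1) by (simp add: indepT_def)
qed

lemma JJ_eq: "i \<in> {1..m} \<Longrightarrow> JJ i p = integral {0..1} (\<lambda>t. hh i (p(cc i := t * p (cc i))))"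
  unfolding JJ_def Intg_def GG_def using indepT_at[OF hh_indepT] by simp

lemma BB_dep: "dep m s BB"
proof -
  have "dep m s (JJ i)" if i: "i \<in> {1..m}" for i
  proof (rule depI)
    fix p q :: jpt assume pq: "\<And>c. c \<in> Cs m s \<Longrightarrow> p c = q c"
    have cs: "cc i \<in> Cs m s" using i by (simp add: cc_def)
    have "hh i (p(cc i := t * p (cc i))) = hh i (q(cc i := t * q (cc i)))" for t
      by (rule depD[OF hh_dep[OF i]]) (use pq cs in auto)
    then show "JJ i p = JJ i q" unfolding JJ_eq[OF i] by simp
  qed
  then show ?thesis unfolding BB_def[abs_def]
    by (intro dep_sum dep_mult dep_coord) (auto simp: cc_def)
qed

lemma pd_hh_out:
  assumes "i \<in> {1..m}" "d \<notin> Zs i"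
  shows "pd d (hh i) = (\<lambda>p. pd d (b i) (zeroset (Zs i) p))"
  unfolding hh_def[abs_def] by (rule pd_zs_out[OF smooth_pdiff[OF b_smooth[OF assms(1)]] assms(2)])

lemma pd_hh_in:
  assumes "d \<in> Zs i"
  shows "pd d (hh i) = (\<lambda>p. 0)"
  unfolding hh_def[abs_def] by (rule pd_zs_in[OF assms])

lemma pd_JJ:
  assumes i: "i \<in> {1..m}" and l: "l \<in> {1..m}"
  shows "pd (cc l) (JJ i) p = integral {0..1} (\<lambda>t. if l = i then pd (cc i) (hh i) (p(cc i := t * p (cc i))) * t
      else pd (cc l) (hh i) (p(cc i := t * p (cc i))))"
proof -
  have hs: "smooth_jet (hh i)" "indepT (hh i)" using hh_smooth[OF i] hh_indepT[OF i] by auto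
  have der: "pd (cc l) (GG i) q = (if l = i then pd (cc i) (hh i) (q(cc i := q Tc * q (cc i))) * q Tc
       else pd (cc l) (hh i) (q(cc i := q Tc * q (cc i))))" for q
  proof (rule pd_eqI)
    have "((\<lambda>t. hh i ((\<lambda>q. q(cc i := q Tc * q (cc i))) (q(cc l := t)))) has_field_derivative
     (if cc l = Tc then pd (cc i) (hh i) ((\<lambda>q. q(cc i := q Tc * q (cc i))) q) * q (cc i)
      else if cc l = cc i then pd (cc i) (hh i) ((\<lambda>q. q(cc i := q Tc * q (cc i))) q) * q Tc
      else pd (cc l) (hh i) ((\<lambda>q. q(cc i := q Tc * q (cc i))) q))) (at (q (cc l)))"
      by (rule scale_derivs[OF smooth_pdiff[OF hs(1)] hs(2) cc_neq_T[OF i] refl])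
    then show "((\<lambda>t. GG i (q(cc l := t))) has_field_derivative (if l = i then pd (cc i) (hh i) (q(cc i := q Tc * q (cc i))) * q Tc
       else pd (cc l) (hh i) (q(cc i := q Tc * q (cc i))))) (at (q (cc l)))"
      using l by (simp add: GG_def)
  qed
  have ind: "indepT (pd e (hh i))" for e by (rule indepT_pd[OF hs(2)])
  have pt: "pd (cc l) (GG i) (p(Tc := t)) = (if l = i then pd (cc i) (hh i) (p(cc i := t * p (cc i))) * t
      else pd (cc l) (hh i) (p(cc i := t * p (cc i))))" for t
  proof -
    have e1: "(p(Tc := t)) Tc = t" by simp
    have e2: "(p(Tc := t)) (cc i) = p (cc i)" using cc_neq_T[OF i] by simp
    show ?thesis unfolding der e1 e2 using indepT_at[OF ind i, where p = p and t = t] e1 e2 by simp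
  qed
  show ?thesis
    unfolding JJ_def pd_Intg[OF GG_smooth[OF i] cc_neq_T[OF l]] Intg_def pt ..
qed

lemma pd_term:
  assumes i: "i \<in> {1..m}"
  shows "pd (cc l) (\<lambda>p. p (cc i) * JJ i p) p = (if l = i then 1 else 0) * JJ i p + p (cc i) * pd (cc l) (JJ i) p"
  by (subst pd_mult) (auto intro: smooth_pdiff JJ_smooth[OF i])

lemma cont_line:
  assumes "smooth_jet g"
  shows "continuous_on S (\<lambda>t. g (p(c := t * x)))"
  by (rule cont_comp_smooth[OF assms], intro cont_upd continuous_on_const continuous_on_mult continuous_on_id)

lemma line_deriv:
  assumes "pdiff c g"
  shows "((\<lambda>t. g (p(c := t * x))) has_field_derivative pd c g (p(c := t * x)) * x) (at t)"
  by (rule DERIV_chain2[OF pd_line[OF assms]]) (auto intro!: derivative_eq_intros)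

lemma term_same:
  assumes i: "i \<in> {1..m}"
  shows "pd (cc i) (\<lambda>p. p (cc i) * JJ i p) p = hh i p"
proof -
  define x where "x = p (cc i)"
  have hs: "smooth_jet (hh i)" using hh_smooth[OF i] .
  have "pd (cc i) (\<lambda>p. p (cc i) * JJ i p) p =
     integral {0..1} (\<lambda>t. hh i (p(cc i := t * x))) + x * integral {0..1} (\<lambda>t. pd (cc i) (hh i) (p(cc i := t * x)) * t)"
  proof -
    have "pd (cc i) (\<lambda>p. p (cc i) * JJ i p) p = JJ i p + p (cc i) * pd (cc i) (JJ i) p"
      using pd_term[OF i, of i p] by simp
    then show ?thesis unfolding pd_JJ[OF i i] JJ_eq[OF i, of p] x_def by simp
  qed
  also have "\<dots> = integral {0..1} (\<lambda>t. hh i (p(cc i := t * x)) + t * (pd (cc i) (hh i) (p(cc i := t * x)) * x))"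
  proof -
    have c1: "continuous_on {0..1} (\<lambda>t. hh i (p(cc i := t * x)))" by (rule cont_line[OF hs])
    have c2: "continuous_on {0..1} (\<lambda>t. t * (pd (cc i) (hh i) (p(cc i := t * x)) * x))"
      by (intro continuous_on_mult continuous_on_id continuous_on_const cont_line smooth_pd hs)
    have "integral {0..1} (\<lambda>t. hh i (p(cc i := t * x)) + t * (pd (cc i) (hh i) (p(cc i := t * x)) * x)) =
      integral {0..1} (\<lambda>t. hh i (p(cc i := t * x))) + integral {0..1} (\<lambda>t. t * (pd (cc i) (hh i) (p(cc i := t * x)) * x))"
      by (rule integral_add) (use c1 c2 integrable_continuous_interval in blast)+
    moreover have "integral {0..1} (\<lambda>t. t * (pd (cc i) (hh i) (p(cc i := t * x)) * x)) =
        x * integral {0..1} (\<lambda>t. pd (cc i) (hh i) (p(cc i := t * x)) * t)"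
    proof -
      have "(\<lambda>t. t * (pd (cc i) (hh i) (p(cc i := t * x)) * x)) = (\<lambda>t. x * (pd (cc i) (hh i) (p(cc i := t * x)) * t))"
        by (auto simp: fun_eq_iff algebra_simps)
      then show ?thesis by (simp only: integral_mult_right)
    qed
    ultimately show ?thesis by simp
  qed
  also have "\<dots> = 1 * hh i (p(cc i := 1 * x)) - 0 * hh i (p(cc i := 0 * x))"
  proof (rule ftc01[where \<phi> = "\<lambda>t. t * hh i (p(cc i := t * x))"])
    fix t
    show "((\<lambda>t. t * hh i (p(cc i := t * x))) has_field_derivative
         hh i (p(cc i := t * x)) + t * (pd (cc i) (hh i) (p(cc i := t * x)) * x)) (at t)"
      by (rule DERIV_cong[OF DERIV_mult[OF DERIV_ident line_deriv[OF smooth_pdiff[OF hs], where c = "cc i" and p = p and x = x and t = t]]])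
         (simp add: algebra_simps)
  qed
  also have "\<dots> = hh i p" by (simp add: x_def)
  finally show ?thesis .
qed

lemma term_above:
  assumes i: "i \<in> {1..m}" and l: "l \<in> {1..m}" and li: "i < l"
  shows "pd (cc l) (\<lambda>p. p (cc i) * JJ i p) p = 0"
proof -
  have "cc l \<in> Zs i" using li l by simp
  then show ?thesis unfolding pd_term[OF i] pd_JJ[OF i l] pd_hh_in[OF \<open>cc l \<in> Zs i\<close>] using li by simp
qed

lemma term_below:
  assumes i: "i \<in> {1..m}" and l: "l \<in> {1..m}" and li: "l < i"
  shows "pd (cc l) (\<lambda>p. p (cc i) * JJ i p) p = b l (zeroset (Zs i) p) - b l (zeroset (Zs (i - 1)) p)"
proof -
  define x where "x = p (cc i)"
  define g where "g q = b l (zeroset (Zs i) q)" for q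
  have gs: "smooth_jet g" unfolding g_def[abs_def] by (rule smooth_zeroset[OF fin_Zs b_smooth[OF l]])
  have nl: "cc l \<notin> Zs i" using li by simp
  have ni: "cc i \<notin> Zs i" by simp
  have eq: "pd (cc l) (hh i) q = pd (cc i) g q" for q
    unfolding pd_hh_out[OF i nl] g_def pd_zs_out[OF smooth_pdiff[OF b_smooth[OF l]] ni] b_sym[OF i l, symmetric, folded cc_def] ..
  have "pd (cc l) (\<lambda>p. p (cc i) * JJ i p) p = x * integral {0..1} (\<lambda>t. pd (cc i) g (p(cc i := t * x)))"
    unfolding pd_term[OF i] pd_JJ[OF i l] eq x_def using li by simp
  also have "\<dots> = integral {0..1} (\<lambda>t. pd (cc i) g (p(cc i := t * x)) * x)"
    by (simp add: algebra_simps)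
  also have "\<dots> = g (p(cc i := 1 * x)) - g (p(cc i := 0 * x))"
    by (rule ftc01[where \<phi> = "\<lambda>t. g (p(cc i := t * x))"]) (rule line_deriv[OF smooth_pdiff[OF gs]])
  also have "\<dots> = b l (zeroset (Zs i) p) - b l (zeroset (Zs (i - 1)) p)"
  proof -
    have "Zs (i - 1) = insert (cc i) (Zs i)" using i by (auto simp: Zs_def)
    then show ?thesis by (simp add: g_def x_def zeroset_insert(1))
  qed
  finally show ?thesis .
qed

lemma BB_pd:
  assumes l: "l \<in> {1..m}"
  shows "pd (cc l) BB = b l"
proof
  fix p
  define F where "F i = b l (zeroset (Zs i) p)" for i
  have pdi: "pdiff (cc l) (\<lambda>p. p (cc i) * JJ i p)" if "i \<in> {1..m}" for i
    by (intro pdiff_mult pdiff_coord smooth_pdiff JJ_smooth that)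
  have "pd (cc l) BB p = (\<Sum>i=1..m. pd (cc l) (\<lambda>p. p (cc i) * JJ i p) p)"
    unfolding BB_def[abs_def] by (subst pd_sum) (use pdi in auto)
  also have "\<dots> = (\<Sum>i=1..m. if i < l then 0 else if i = l then F l else F i - F (i - 1))"
  proof (rule sum.cong[OF refl])
    fix i assume i: "i \<in> {1..m}"
    show "pd (cc l) (\<lambda>p. p (cc i) * JJ i p) p = (if i < l then 0 else if i = l then F l else F i - F (i - 1))"
    proof (cases "i < l")
      case True then show ?thesis using term_above[OF i l] by simp
    next
      case False
      show ?thesis
      proof (cases "i = l")
        case True then show ?thesis using term_same[OF i] by (simp add: F_def hh_def)
      next
        case nil: False
        then have "l < i" using False by simp
        then show ?thesis using term_below[OF i l] False nil by (simp add: F_def)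
      qed
    qed
  qed
  also have "\<dots> = F m"
    using l
  proof (induction m)
    case 0 then show ?case by simp
  next
    case (Suc n)
    show ?case
    proof (cases "l = Suc n")
      case True
      have "(\<Sum>i=1..n. if i < l then 0 else if i = l then F l else F i - F (i - 1)) = 0"
        using True by (intro sum.neutral) auto
      then show ?thesis using True by simp
    next
      case False
      then have "l \<in> {1..n}" using Suc.prems by simp
      then show ?thesis using Suc.IH False Suc.prems by simp
    qed
  qed
  also have "F m = b l p" unfolding F_def Zs_def by simp
  finally show "pd (cc l) BB p = b l p" .
qed

end

lemma poincare:
  fixes m s :: nat and b :: "nat \<Rightarrow> jpt \<Rightarrow> real"
  assumes "\<And>l. l \<in> {1..m} \<Longrightarrow> smooth_jet (b l)"
    and "\<And>l. l \<in> {1..m} \<Longrightarrow> dep m s (b l)"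
    and "\<And>i l. i \<in> {1..m} \<Longrightarrow> l \<in> {1..m} \<Longrightarrow> pd (W i s) (b l) = pd (W l s) (b i)"
  shows "\<exists>B. smooth_jet B \<and> dep m s B \<and> (\<forall>l\<in>{1..m}. pd (W l s) B = b l)"
proof -
  interpret poinc m s b using assms by unfold_locales auto
  show ?thesis using BB_smooth BB_dep BB_pd unfolding cc_def by blast
qed



lemma pd_lincomb:
  assumes "\<And>r. r \<in> A \<Longrightarrow> smooth_jet (g r)"
  shows "pd c (\<lambda>p. \<Sum>r\<in>A. a r * g r p) = (\<lambda>p. \<Sum>r\<in>A. a r * pd c (g r) p)"
proof -
  have pdi: "pdiff c (\<lambda>p. a r * g r p)" if "r \<in> A" for r
    by (intro pdiff_mult pdiff_const smooth_pdiff assms that)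
  have "pd c (\<lambda>p. a r * g r p) = (\<lambda>p. a r * pd c (g r) p)" if "r \<in> A" for r
    by (subst pd_mult) (auto intro: smooth_pdiff assms that)
  then show ?thesis by (subst pd_sum) (use pdi in auto)
qed

lemma EL_pd_expand:
  assumes f: "smooth_jet f" "dep m k f"
  shows "pd c (EL m j f) = (\<lambda>p. \<Sum>r\<le>k. (-1) ^ r * pd c ((Dx m ^^ r) (pd (W j r) f)) p)"
  unfolding EL_fin[OF f(2)]
  by (rule pd_lincomb) (use Dxn_props[OF smooth_pd[OF f(1)] dep_pd[OF f(2)]] in blast)

lemma top_vanish:
  assumes f: "smooth_jet f" "dep m k f" and EL: "dep m S (EL m j f)" and Sk: "S < 2 * k"
    and i: "i \<in> {1..m}"
  shows "pd (W i k) (pd (W j k) f) = (\<lambda>p. 0)"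
proof
  fix p
  have u: "smooth_jet (pd (W j r) f)" "dep m k (pd (W j r) f)" for r
    using f by (auto intro: smooth_pd dep_pd)
  have "pd (W i (k + k)) (EL m j f) p = 0"
    by (rule pd_zero_outside[OF EL]) (use Sk in simp)
  moreover have "pd (W i (k + k)) (EL m j f) p = (-1) ^ k * pd (W i k) (pd (W j k) f) p"
  proof -
    have z: "pd (W i (k + k)) ((Dx m ^^ r) (pd (W j r) f)) p = 0" if "r < k" for r
      by (rule pd_zero_outside[of m "k + r"]) (use Dxn_props[OF u] that in auto)
    have "pd (W i (k + k)) (EL m j f) p = (\<Sum>r\<le>k. (-1) ^ r * pd (W i (k + k)) ((Dx m ^^ r) (pd (W j r) f)) p)"
      unfolding EL_pd_expand[OF f] ..
    also have "\<dots> = (\<Sum>r<k. (-1) ^ r * pd (W i (k + k)) ((Dx m ^^ r) (pd (W j r) f)) p) +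
        (-1) ^ k * pd (W i (k + k)) ((Dx m ^^ k) (pd (W j k) f)) p"
      by (simp add: lessThan_Suc_atMost[symmetric])
    also have "\<dots> = (-1) ^ k * pd (W i k) (pd (W j k) f) p"
      using z pd_topn[OF u i, of k] by simp
    finally show ?thesis .
  qed
  ultimately show "pd (W i k) (pd (W j k) f) p = 0" by simp
qed

lemma sym_cond:
  assumes f: "smooth_jet f" "dep m (Suc k) f" and EL: "dep m S (EL m j f)" and Sk: "S \<le> 2 * k"
    and i: "i \<in> {1..m}" and bj: "smooth_jet (pd (W j (Suc k)) f)" "dep m k (pd (W j (Suc k)) f)"
  shows "pd (W i k) (pd (W j (Suc k)) f) = pd (W j k) (pd (W i (Suc k)) f)"
proof
  fix p
  let ?K = "Suc k"
  have u: "smooth_jet (pd (W j r) f)" "dep m ?K (pd (W j r) f)" for r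
    using f by (auto intro: smooth_pd dep_pd)
  have "pd (W i (k + ?K)) (EL m j f) p = 0"
    by (rule pd_zero_outside[OF EL]) (use Sk in simp)
  moreover have "pd (W i (k + ?K)) (EL m j f) p =
      (-1) ^ k * pd (W i ?K) (pd (W j k) f) p + (-1) ^ ?K * pd (W i k) (pd (W j ?K) f) p"
  proof -
    have z: "pd (W i (k + ?K)) ((Dx m ^^ r) (pd (W j r) f)) p = 0" if "r < k" for r
      by (rule pd_zero_outside[of m "?K + r"]) (use Dxn_props[OF u] that in auto)
    have t1: "pd (W i (k + ?K)) ((Dx m ^^ k) (pd (W j k) f)) p = pd (W i ?K) (pd (W j k) f) p"
      using pd_topn[OF u i, of k] by (simp add: add.commute)
    have t2: "pd (W i (k + ?K)) ((Dx m ^^ ?K) (pd (W j ?K) f)) p = pd (W i k) (pd (W j ?K) f) p"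
      using pd_topn[OF bj i, of ?K] by simp
    have "pd (W i (k + ?K)) (EL m j f) p = (\<Sum>r\<le>?K. (-1) ^ r * pd (W i (k + ?K)) ((Dx m ^^ r) (pd (W j r) f)) p)"
      unfolding EL_pd_expand[OF f] ..
    also have "\<dots> = (\<Sum>r<k. (-1) ^ r * pd (W i (k + ?K)) ((Dx m ^^ r) (pd (W j r) f)) p) +
        (-1) ^ k * pd (W i (k + ?K)) ((Dx m ^^ k) (pd (W j k) f)) p +
        (-1) ^ ?K * pd (W i (k + ?K)) ((Dx m ^^ ?K) (pd (W j ?K) f)) p"
      by (simp add: lessThan_Suc_atMost[symmetric])
    also have "\<dots> = (-1) ^ k * pd (W i ?K) (pd (W j k) f) p + (-1) ^ ?K * pd (W i k) (pd (W j ?K) f) p"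
      using z t1 t2 by simp
    finally show ?thesis .
  qed
  moreover have "pd (W i ?K) (pd (W j k) f) = pd (W j k) (pd (W i ?K) f)" by (rule schwarz[OF f(1)])
  ultimately show "pd (W i k) (pd (W j ?K) f) p = pd (W j k) (pd (W i ?K) f) p"
    by (simp add: algebra_simps)
qed

lemma affine_final:
  assumes f: "smooth_jet f" "dep m (Suc k) f" and EL: "\<And>j. j \<in> {1..m} \<Longrightarrow> dep m S (EL m j f)"
    and Sk: "S < 2 * Suc k"
  shows "smooth_jet (\<lambda>p. f (zeroset ((\<lambda>l. W l (Suc k)) ` {1..m}) p))"
    "dep m k (\<lambda>p. f (zeroset ((\<lambda>l. W l (Suc k)) ` {1..m}) p))"
    "\<And>i. i \<in> {1..m} \<Longrightarrow> smooth_jet (pd (W i (Suc k)) f)"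
    "\<And>i. i \<in> {1..m} \<Longrightarrow> dep m k (pd (W i (Suc k)) f)"
    "\<And>p. f p = f (zeroset ((\<lambda>l. W l (Suc k)) ` {1..m}) p) + (\<Sum>l=1..m. p (W l (Suc k)) * pd (W l (Suc k)) f p)"
proof -
  let ?Z = "(\<lambda>l. W l (Suc k)) ` {1..m}"
  have H: "pd (W i (Suc k)) (pd (W j (Suc k)) f) = (\<lambda>p. 0)" if "i \<in> {1..m}" "j \<in> {1..m}" for i j
    by (rule top_vanish[OF f EL[OF that(2)] Sk that(1)])
  have A1: "pd (W i (Suc k)) f (zeroset ?Z p) = pd (W i (Suc k)) f p" if "i \<in> {1..m}" for i p
    by (rule affine_decomp(1)[where f = f and m = m and k = "Suc k"]) (use f H that in auto)
  have A2: "f p = f (zeroset ?Z p) + (\<Sum>l=1..m. p (W l (Suc k)) * pd (W l (Suc k)) f p)" for p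
    by (rule affine_decomp(2)[where f = f and m = m and k = "Suc k"]) (use f H in auto)
  show "smooth_jet (\<lambda>p. f (zeroset ?Z p))" by (rule smooth_zeroset[OF _ f(1)]) simp
  show "dep m k (\<lambda>p. f (zeroset ?Z p))" using dep_zeroset[OF f(2)] by simp
  show "\<And>i. i \<in> {1..m} \<Longrightarrow> smooth_jet (pd (W i (Suc k)) f)" using smooth_pd[OF f(1)] by blast
  show "\<And>p. f p = f (zeroset ?Z p) + (\<Sum>l=1..m. p (W l (Suc k)) * pd (W l (Suc k)) f p)" by (rule A2)
  fix i assume i: "i \<in> {1..m}"
  have "dep m k (\<lambda>p. pd (W i (Suc k)) f (zeroset ?Z p))"
    using dep_zeroset[OF dep_pd[OF f(2)]] by simp
  moreover have "(\<lambda>p. pd (W i (Suc k)) f (zeroset ?Z p)) = pd (W i (Suc k)) f"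
    using A1[OF i] by auto
  ultimately show "dep m k (pd (W i (Suc k)) f)" by simp
qed

lemma reduce:
  assumes f: "smooth_jet f" "dep m (Suc k) f" and EL: "\<And>j. j \<in> {1..m} \<Longrightarrow> dep m S (EL m j f)"
    and Sk: "S \<le> 2 * k"
  shows "\<exists>f'. smooth_jet f' \<and> dep m k f' \<and> (\<forall>j\<in>{1..m}. EL m j f' = EL m j f)"
proof -
  let ?Z = "(\<lambda>l. W l (Suc k)) ` {1..m}"
  define a where "a p = f (zeroset ?Z p)" for p
  define b where "b i = pd (W i (Suc k)) f" for i
  have Sk': "S < 2 * Suc k" using Sk by simp
  note AF = affine_final[OF f EL Sk', folded a_def b_def]
  have sym: "pd (W i k) (b l) = pd (W l k) (b i)" if "i \<in> {1..m}" "l \<in> {1..m}" for i l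
    unfolding b_def by (rule sym_cond[OF f EL[OF that(2)] Sk that(1)]) (use AF that in \<open>auto simp: b_def\<close>)
  obtain B where B: "smooth_jet B" "dep m k B" "\<And>l. l \<in> {1..m} \<Longrightarrow> pd (W l k) B = b l"
    using poincare[of m b k] AF sym by blast
  define f' where "f' p = 1 * f p + (-1) * Dx m B p" for p
  have DB: "smooth_jet (Dx m B)" "dep m (Suc k) (Dx m B)" using Dx_props[OF B(1,2)] by auto
  have sf': "smooth_jet f'" unfolding f'_def[abs_def] using f DB by (intro smooth_add smooth_mult smooth_const) auto
  have ELf': "EL m j f' = EL m j f" if j: "j \<in> {1..m}" for j
  proof -
    have "EL m j f' = (\<lambda>p. 1 * EL m j f p + (-1) * EL m j (Dx m B) p)"
      unfolding f'_def[abs_def] by (rule EL_lin[OF f(1) DB(1) f(2) DB(2)])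
    then show ?thesis unfolding EL_Dx_zero[OF B(1,2) j] by simp
  qed
  have f'eq: "f' = (\<lambda>p. a p - pd X B p - (\<Sum>l=1..m. \<Sum>r<k. p (W l (Suc r)) * pd (W l r) B p))"
  proof
    fix p
    have "Dx m B p = pd X B p + (\<Sum>l=1..m. (\<Sum>r<k. p (W l (Suc r)) * pd (W l r) B p) + p (W l (Suc k)) * b l p)"
      unfolding Dx_eq[OF B(2)] DxF_def using B(3)
      by (simp add: lessThan_Suc_atMost[symmetric])
    then show "f' p = a p - pd X B p - (\<Sum>l=1..m. \<Sum>r<k. p (W l (Suc r)) * pd (W l r) B p)"
      unfolding f'_def using AF(5)[of p] by (simp add: sum.distrib b_def)
  qed
  have "dep m k f'"
    unfolding f'eq
  proof -
    have d1: "dep m k (\<lambda>p. pd X B p)" using dep_pd[OF B(2)] by simp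
    have d2: "dep m k (\<lambda>p. \<Sum>l=1..m. \<Sum>r<k. p (W l (Suc r)) * pd (W l r) B p)"
      by (intro dep_sum dep_mult dep_coord dep_pd B(2)) auto
    have dd: "dep m k (\<lambda>p. a p + (-1) * (pd X B p + (\<Sum>l=1..m. \<Sum>r<k. p (W l (Suc r)) * pd (W l r) B p)))"
      by (intro dep_add dep_mult dep_const d1 d2 AF(2))
    have eq: "(\<lambda>p. a p + (-1) * (pd X B p + (\<Sum>l=1..m. \<Sum>r<k. p (W l (Suc r)) * pd (W l r) B p))) =
       (\<lambda>p. a p - pd X B p - (\<Sum>l=1..m. \<Sum>r<k. p (W l (Suc r)) * pd (W l r) B p))"
      by (rule ext) (simp add: algebra_simps)
    show "dep m k (\<lambda>p. a p - pd X B p - (\<Sum>l=1..m. \<Sum>r<k. p (W l (Suc r)) * pd (W l r) B p))"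
      using dd unfolding eq .
  qed
  then show ?thesis using sf' ELf' by blast
qed

lemma even_case:
  "\<forall>f. smooth_jet f \<and> dep m k f \<and> (\<forall>j\<in>{1..m}. dep m (2 * K) (EL m j f)) \<longrightarrow>
     (\<exists>g. order_le m K g \<and> (\<forall>j\<in>{1..m}. EL m j g = EL m j f))"
proof (induction k)
  case 0
  show ?case by (auto simp: order_le_iff intro: dep_mono[of 0 K])
next
  case (Suc k)
  show ?case
  proof (intro allI impI)
    fix f assume a: "smooth_jet f \<and> dep m (Suc k) f \<and> (\<forall>j\<in>{1..m}. dep m (2 * K) (EL m j f))"
    show "\<exists>g. order_le m K g \<and> (\<forall>j\<in>{1..m}. EL m j g = EL m j f)"
    proof (cases "Suc k \<le> K")
      case True then show ?thesis using a by (auto simp: order_le_iff intro: dep_mono[of "Suc k" K])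
    next
      case False
      then obtain f' where f': "smooth_jet f'" "dep m k f'" "\<forall>j\<in>{1..m}. EL m j f' = EL m j f"
        using reduce[of f m k "2 * K"] a by auto
      then obtain g where "order_le m K g" "\<forall>j\<in>{1..m}. EL m j g = EL m j f'"
        using Suc.IH a by auto
      then show ?thesis using f'(3) by auto
    qed
  qed
qed

lemma odd_trivial:
  assumes "smooth_jet f" "dep m k f" "k \<le> K"
  shows "\<exists>g0 gs. order_le m K g0 \<and> (\<forall>k\<in>{1..m}. order_le m K (gs k)) \<and>
               (\<forall>j\<in>{1..m}. EL m j f =
                  EL m j (\<lambda>p. g0 p + (\<Sum>k=1..m. gs k p * p (W k (K + 1)))))"
proof (intro exI conjI)
  show "order_le m K f" unfolding order_le_iff using assms dep_mono by blast
  show "\<forall>k\<in>{1..m}. order_le m K ((\<lambda>k p. 0) k)" unfolding order_le_iff by simp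
  have "(\<lambda>p. f p + (\<Sum>k=1..m. (\<lambda>k p. 0) k p * p (W k (K + 1)))) = f" by simp
  then show "\<forall>j\<in>{1..m}. EL m j f = EL m j (\<lambda>p. f p + (\<Sum>k=1..m. (\<lambda>k p. 0::real) k p * p (W k (K + 1))))"
    by simp
qed

lemma odd_case:
  "\<forall>f. smooth_jet f \<and> dep m k f \<and> (\<forall>j\<in>{1..m}. dep m (2 * K + 1) (EL m j f)) \<longrightarrow>
     (\<exists>g0 gs. order_le m K g0 \<and> (\<forall>k\<in>{1..m}. order_le m K (gs k)) \<and>
               (\<forall>j\<in>{1..m}. EL m j f =
                  EL m j (\<lambda>p. g0 p + (\<Sum>k=1..m. gs k p * p (W k (K + 1))))))"
proof (induction k)
  case 0
  show ?case
  proof (intro allI impI)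
    fix f assume a: "smooth_jet f \<and> dep m 0 f \<and> (\<forall>j\<in>{1..m}. dep m (2 * K + 1) (EL m j f))"
    show "\<exists>g0 gs. order_le m K g0 \<and> (\<forall>k\<in>{1..m}. order_le m K (gs k)) \<and>
               (\<forall>j\<in>{1..m}. EL m j f = EL m j (\<lambda>p. g0 p + (\<Sum>k=1..m. gs k p * p (W k (K + 1)))))"
      by (rule odd_trivial) (use a in auto)
  qed
next
  case (Suc k)
  show ?case
  proof (intro allI impI)
    fix f assume a: "smooth_jet f \<and> dep m (Suc k) f \<and> (\<forall>j\<in>{1..m}. dep m (2 * K + 1) (EL m j f))"
    show "\<exists>g0 gs. order_le m K g0 \<and> (\<forall>k\<in>{1..m}. order_le m K (gs k)) \<and>
               (\<forall>j\<in>{1..m}. EL m j f = EL m j (\<lambda>p. g0 p + (\<Sum>k=1..m. gs k p * p (W k (K + 1)))))"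
    proof (cases "Suc k \<le> K")
      case True
      show ?thesis
        by (rule odd_trivial) (use a True in auto)
    next
      case False
      show ?thesis
      proof (cases "k = K")
        case True
        have f: "smooth_jet f" "dep m (Suc k) f" and EL: "\<And>j. j \<in> {1..m} \<Longrightarrow> dep m (2 * K + 1) (EL m j f)"
          using a by auto
        have Sk: "2 * K + 1 < 2 * Suc k" using True by simp
        note AF = affine_final[OF f EL Sk]
        let ?g0 = "\<lambda>p. f (zeroset ((\<lambda>l. W l (Suc k)) ` {1..m}) p)"
        let ?gs = "\<lambda>i. pd (W i (Suc k)) f"
        have eq: "(\<lambda>p. ?g0 p + (\<Sum>k=1..m. ?gs k p * p (W k (K + 1)))) = f"
        proof
          fix p show "?g0 p + (\<Sum>k=1..m. ?gs k p * p (W k (K + 1))) = f p"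
            using AF(5)[of p] True by (simp add: mult.commute)
        qed
        have o1: "order_le m K ?g0" unfolding order_le_iff using AF(1,2) True by simp
        have o2: "\<forall>i\<in>{1..m}. order_le m K (?gs i)" unfolding order_le_iff using AF(3,4) True by simp
        show ?thesis
          by (rule exI[of _ ?g0], rule exI[of _ ?gs]) (use o1 o2 eq in simp)
      next
        case False
        then have kK: "2 * K + 1 \<le> 2 * k" using \<open>\<not> Suc k \<le> K\<close> by simp
        obtain f' where f': "smooth_jet f'" "dep m k f'" "\<forall>j\<in>{1..m}. EL m j f' = EL m j f"
          using reduce[of f m k "2 * K + 1"] a kK by auto
        then show ?thesis using Suc.IH[rule_format, of f'] a by auto
      qed
    qed
  qed
qed

theorem mainTheorem9:
  fixes m S :: nat and f :: "jpt \<Rightarrow> real"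
  assumes "finite_order m f"
    and "\<forall>j\<in>{1..m}. order_le m S (EL m j f)"
  shows "(\<forall>K. S = 2 * K \<longrightarrow>
            (\<exists>g. order_le m K g \<and> (\<forall>j\<in>{1..m}. EL m j g = EL m j f)))
       \<and> (\<forall>K. S = 2 * K + 1 \<longrightarrow>
            (\<exists>g0 gs. order_le m K g0 \<and> (\<forall>k\<in>{1..m}. order_le m K (gs k)) \<and>
               (\<forall>j\<in>{1..m}. EL m j f =
                  EL m j (\<lambda>p. g0 p + (\<Sum>k=1..m. gs k p * p (W k (K + 1)))))))"
proof -
  obtain k where fk: "order_le m k f" using assms(1) unfolding finite_order_def by blast
  have f: "smooth_jet f" "dep m k f" using fk by (auto simp: order_le_iff)
  have EL: "\<forall>j\<in>{1..m}. dep m S (EL m j f)" using assms(2) by (auto simp: order_le_iff)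
  show ?thesis
  proof (intro conjI allI impI)
    fix K assume "S = 2 * K"
    then show "\<exists>g. order_le m K g \<and> (\<forall>j\<in>{1..m}. EL m j g = EL m j f)"
      using even_case[of m k K] f EL by auto
  next
    fix K assume "S = 2 * K + 1"
    then show "\<exists>g0 gs. order_le m K g0 \<and> (\<forall>k\<in>{1..m}. order_le m K (gs k)) \<and>
               (\<forall>j\<in>{1..m}. EL m j f = EL m j (\<lambda>p. g0 p + (\<Sum>k=1..m. gs k p * p (W k (K + 1)))))"
      using odd_case[of m k K] f EL by auto
  qed
qed

end
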